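(* Let $A$ be a finite alphabet, let $\phi: A^* \to A^*$ be a non-erasing morphism, and let $w \in A^{\mathbf{N}}$ be a pure morphic word generated by $\phi$, i.e. there exist a letter $b \in A$ and a nonempty word $u \in A^*$ with $\phi(b) = bu$ and $w = \lim_{i\to\infty} \phi^i(b)$ (so that $\phi(w) = w$). If for every letter $a \in A$ the frequency of $a$ in $w$ exists, then for every finite word $v \in A^*$ that is a factor of $w$, the frequency of $v$ in $w$ exists.
   Context: For an infinite word $w = w[1]w[2]w[3]\cdots$ and a finite nonempty word $v$ of length $k$, the (ordinary) frequency of $v$ in $w$ is $$\lim_{n\to\infty} \frac{\#\{ i : 1 \le i \le n,\ w[i]w[i+1]\cdots w[i+k-1] = v\}}{n},$$ if this limit exists. A morphism $\phi: A^*\to A^*$ is a monoid homomorphism of the free monoid; it is non-erasing if $\phi(a)$ is nonempty for every $a\in A$. A factor of $w$ is a finite word of the form $w[t]w[t+1]\cdots w[r]$ with $1\le t\le r$. *)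

theory Defs
  imports Complex_Main
begin

text \<open>Infinite words are functions nat => 'a, indexed from 0 (w 0 is the paper's w[1]).\<close>

definition morph_ext :: "('a \<Rightarrow> 'a list) \<Rightarrow> 'a list \<Rightarrow> 'a list" where
  "morph_ext phi xs = concat (map phi xs)"

definition non_erasing :: "('a \<Rightarrow> 'a list) \<Rightarrow> bool" where
  "non_erasing phi \<longleftrightarrow> (\<forall>a. phi a \<noteq> [])"

definition word_limit :: "(nat \<Rightarrow> 'a list) \<Rightarrow> (nat \<Rightarrow> 'a) \<Rightarrow> bool" where
  "word_limit xs w \<longleftrightarrow> (\<forall>n. \<exists>i0. \<forall>i\<ge>i0. n < length (xs i) \<and> xs i ! n = w n)"

definition pure_morphic_gen :: "('a \<Rightarrow> 'a list) \<Rightarrow> (nat \<Rightarrow> 'a) \<Rightarrow> bool" where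
  "pure_morphic_gen phi w \<longleftrightarrow>
     (\<exists>b u. u \<noteq> [] \<and> phi b = b # u \<and> word_limit (\<lambda>i. (morph_ext phi ^^ i) [b]) w)"

definition occurs_at :: "(nat \<Rightarrow> 'a) \<Rightarrow> 'a list \<Rightarrow> nat \<Rightarrow> bool" where
  "occurs_at w v i \<longleftrightarrow> (\<forall>j<length v. w (i + j) = v ! j)"

definition is_factor :: "'a list \<Rightarrow> (nat \<Rightarrow> 'a) \<Rightarrow> bool" where
  "is_factor v w \<longleftrightarrow> v \<noteq> [] \<and> (\<exists>i. occurs_at w v i)"

definition occ_count :: "(nat \<Rightarrow> 'a) \<Rightarrow> 'a list \<Rightarrow> nat \<Rightarrow> nat" where
  "occ_count w v n = card {i. i < n \<and> occurs_at w v i}"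

definition freq_exists :: "(nat \<Rightarrow> 'a) \<Rightarrow> 'a list \<Rightarrow> bool" where
  "freq_exists w v \<longleftrightarrow> (\<exists>L. (\<lambda>n. real (occ_count w v n) / real n) \<longlonglongrightarrow> L)"

end

theory Submission
  imports Defs
begin

lemma stolz:
  fixes a b :: "nat \<Rightarrow> real"
  assumes inc: "\<And>n. b n < b (Suc n)" and top: "filterlim b at_top sequentially"
    and lim: "(\<lambda>n. (a (Suc n) - a n) / (b (Suc n) - b n)) \<longlonglongrightarrow> L"
  shows "(\<lambda>n. a n / b n) \<longlonglongrightarrow> L"
proof (rule LIMSEQ_I)
  fix r :: real assume r: "r > 0"
  from LIMSEQ_D[OF lim, of "r/2"] r obtain N1 where
    N1: "\<And>n. n \<ge> N1 \<Longrightarrow> \<bar>(a (Suc n) - a n) / (b (Suc n) - b n) - L\<bar> < r/2" by auto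
  from top have "eventually (\<lambda>n. b n > 0) sequentially" by (simp add: filterlim_at_top_dense)
  then obtain N2 where N2: "\<And>n. n \<ge> N2 \<Longrightarrow> b n > 0" by (auto simp: eventually_sequentially)
  define N where "N = max N1 N2"
  have stp: "\<bar>a (Suc n) - a n - L * (b (Suc n) - b n)\<bar> \<le> r/2 * (b (Suc n) - b n)" if "n \<ge> N" for n
  proof -
    have d: "b (Suc n) - b n > 0" using inc[of n] by simp
    have "\<bar>(a (Suc n) - a n) / (b (Suc n) - b n) - L\<bar> < r/2" using N1[of n] that by (simp add: N_def)
    hence "\<bar>((a (Suc n) - a n) - L * (b (Suc n) - b n)) / (b (Suc n) - b n)\<bar> < r/2"
      using d by (simp add: field_simps)
    hence "\<bar>(a (Suc n) - a n) - L * (b (Suc n) - b n)\<bar> / (b (Suc n) - b n) < r/2"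
      using d by (simp add: abs_divide)
    thus ?thesis using d by (simp add: pos_divide_less_eq)
  qed
  have tel: "\<bar>a n - a N - L * (b n - b N)\<bar> \<le> r/2 * (b n - b N)" if "n \<ge> N" for n
    using that
  proof (induction n rule: dec_induct)
    case base then show ?case by simp
  next
    case (step n)
    have "\<bar>a (Suc n) - a N - L * (b (Suc n) - b N)\<bar> \<le>
      \<bar>a n - a N - L * (b n - b N)\<bar> + \<bar>a (Suc n) - a n - L * (b (Suc n) - b n)\<bar>"
      using abs_triangle_ineq[where a="a n - a N - L * (b n - b N)" and b="a (Suc n) - a n - L * (b (Suc n) - b n)"]
      by (simp add: algebra_simps)
    also have "\<dots> \<le> r/2 * (b n - b N) + r/2 * (b (Suc n) - b n)"
      using step.IH \<open>N \<le> n\<close> stp[of n] by (intro add_mono) auto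
    also have "\<dots> = r/2 * (b (Suc n) - b N)" by (subst distrib_left[symmetric]) simp
    finally show ?case .
  qed
  define c where "c = \<bar>a N - L * b N\<bar>"
  from top have "eventually (\<lambda>n. b n > 2 * c / r + 1) sequentially" by (simp add: filterlim_at_top_dense)
  then obtain N3 where N3: "\<And>n. n \<ge> N3 \<Longrightarrow> b n > 2 * c / r + 1" by (auto simp: eventually_sequentially)
  show "\<exists>no. \<forall>n\<ge>no. norm (a n / b n - L) < r"
  proof (intro exI allI impI)
    fix n assume n: "n \<ge> max N N3"
    have bN: "b N > 0" using N2 by (simp add: N_def)
    have bn: "b n > 0" using N2 n by (simp add: N_def)
    have bnN: "b N \<le> b n"
    proof -
      have "b N \<le> b m" if "m \<ge> N" for m using that
        by (induction m rule: dec_induct) (auto intro: order_trans less_imp_le[OF inc])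
      thus ?thesis using n by auto
    qed
    have eqa: "\<bar>a n - L * b n\<bar> = \<bar>(a N - L * b N) + (a n - a N - L * (b n - b N))\<bar>"
      by (rule arg_cong[where f=abs]) (simp add: algebra_simps)
    have "\<bar>a n - L * b n\<bar> \<le> c + r/2 * (b n - b N)"
      using tel[of n] n abs_triangle_ineq[where a="a N - L * b N" and b="a n - a N - L * (b n - b N)"] unfolding c_def eqa
      by linarith
    also have "\<dots> < r/2 * b n + r/2 * b n"
    proof -
      have "b n > 2 * c / r" using N3[of n] n by simp
      hence "c < r/2 * b n" using r by (simp add: field_simps)
      moreover have "r/2 * (b n - b N) < r/2 * b n" using r bN by simp
      ultimately show ?thesis by simp
    qed
    finally have "\<bar>a n - L * b n\<bar> < r * b n" by simp
    hence "\<bar>a n - L * b n\<bar> / b n < r" using bn by (simp add: pos_divide_less_eq)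
    moreover have "a n / b n - L = (a n - L * b n) / b n" using bn by (simp add: field_simps)
    ultimately show "norm (a n / b n - L) < r" using bn by (simp add: abs_divide)
  qed
qed

definition good :: "(nat \<Rightarrow> real) \<Rightarrow> (nat \<Rightarrow> real) \<Rightarrow> bool" where
  "good A Oc \<longleftrightarrow> (\<forall>n. A n > 0) \<and> (\<exists>d C. C > 0 \<and> (\<lambda>n. A n / real n ^ d) \<longlonglongrightarrow> C)
     \<and> (\<exists>\<rho>. (\<lambda>n. Oc n / A n) \<longlonglongrightarrow> \<rho>)"

lemma deg_up:
  assumes "(\<lambda>n. A n / real n ^ d) \<longlonglongrightarrow> C" "d \<le> D"
  shows "(\<lambda>n. A n / real n ^ D) \<longlonglongrightarrow> (if d = D then C else 0)"
proof (cases "d = D")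
  case True then show ?thesis using assms by simp
next
  case False
  hence lt: "d < D" using assms by simp
  have z: "(\<lambda>n. inverse (real n ^ (D - d))) \<longlonglongrightarrow> 0"
    by (rule tendsto_inverse_0_at_top, rule filterlim_pow_at_top) (use lt in \<open>auto intro: filterlim_real_sequentially\<close>)
  have "(\<lambda>n. A n / real n ^ d * inverse (real n ^ (D - d))) \<longlonglongrightarrow> C * 0"
    by (rule tendsto_mult[OF assms(1) z])
  moreover have "eventually (\<lambda>n. A n / real n ^ d * inverse (real n ^ (D - d)) = A n / real n ^ D) sequentially"
  proof (rule eventually_sequentiallyI[of 1])
    fix n :: nat assume "n \<ge> 1"
    hence "real n ^ D = real n ^ d * real n ^ (D - d)" using lt by (simp add: power_add[symmetric])
    thus "A n / real n ^ d * inverse (real n ^ (D - d)) = A n / real n ^ D"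
      by (simp add: divide_inverse)
  qed
  ultimately show ?thesis using False by (auto intro: Lim_transform_eventually)
qed

lemma good_add:
  assumes "good A Oa" "good B Ob"
  shows "good (\<lambda>n. A n + B n) (\<lambda>n. Oa n + Ob n)"
proof -
  from assms obtain d1 C1 \<rho>1 d2 C2 \<rho>2 where
    pA: "\<forall>n. A n > 0" and pB: "\<forall>n. B n > 0" and
    C1: "C1 > 0" "(\<lambda>n. A n / real n ^ d1) \<longlonglongrightarrow> C1" and C2: "C2 > 0" "(\<lambda>n. B n / real n ^ d2) \<longlonglongrightarrow> C2"
    and r1: "(\<lambda>n. Oa n / A n) \<longlonglongrightarrow> \<rho>1" and r2: "(\<lambda>n. Ob n / B n) \<longlonglongrightarrow> \<rho>2"
    unfolding good_def by blast
  define D where "D = max d1 d2"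
  define K1 where "K1 = (if d1 = D then C1 else 0)"
  define K2 where "K2 = (if d2 = D then C2 else 0)"
  have l1: "(\<lambda>n. A n / real n ^ D) \<longlonglongrightarrow> K1" unfolding K1_def by (rule deg_up[OF C1(2)]) (simp add: D_def)
  have l2: "(\<lambda>n. B n / real n ^ D) \<longlonglongrightarrow> K2" unfolding K2_def by (rule deg_up[OF C2(2)]) (simp add: D_def)
  have K: "K1 + K2 > 0" "K1 \<ge> 0" "K2 \<ge> 0" using C1 C2 by (auto simp: K1_def K2_def D_def)
  have ls: "(\<lambda>n. (A n + B n) / real n ^ D) \<longlonglongrightarrow> K1 + K2"
    using tendsto_add[OF l1 l2] by (simp add: add_divide_distrib)
  have "(\<lambda>n. ((Oa n / A n) * (A n / real n ^ D) + (Ob n / B n) * (B n / real n ^ D)) / ((A n + B n) / real n ^ D))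
     \<longlonglongrightarrow> (\<rho>1 * K1 + \<rho>2 * K2) / (K1 + K2)"
    using K by (intro tendsto_intros r1 r2 l1 l2 ls) auto
  moreover have "eventually (\<lambda>n. ((Oa n / A n) * (A n / real n ^ D) + (Ob n / B n) * (B n / real n ^ D)) / ((A n + B n) / real n ^ D)
     = (Oa n + Ob n) / (A n + B n)) sequentially"
  proof (rule eventually_sequentiallyI[of 1])
    fix n :: nat assume "n \<ge> 1"
    hence "real n ^ D > 0" by simp
    moreover have "A n > 0" "B n > 0" using pA pB by auto
    ultimately have P: "real n ^ D > 0" and a: "A n > 0" and b: "B n > 0" by auto
    have e1: "(Oa n / A n) * (A n / real n ^ D) = Oa n / real n ^ D" using a by simp
    have e2: "(Ob n / B n) * (B n / real n ^ D) = Ob n / real n ^ D" using b by simp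
    have e3: "(Oa n / real n ^ D + Ob n / real n ^ D) / ((A n + B n) / real n ^ D) = (Oa n + Ob n) / (A n + B n)"
      using P by (simp add: add_divide_distrib[symmetric])
    show "((Oa n / A n) * (A n / real n ^ D) + (Ob n / B n) * (B n / real n ^ D)) / ((A n + B n) / real n ^ D)
     = (Oa n + Ob n) / (A n + B n)" by (simp only: e1 e2 e3)
  qed
  ultimately have "(\<lambda>n. (Oa n + Ob n) / (A n + B n)) \<longlonglongrightarrow> (\<rho>1 * K1 + \<rho>2 * K2) / (K1 + K2)"
    by (rule Lim_transform_eventually)
  thus ?thesis unfolding good_def using pA pB ls K by (auto intro: add_pos_pos)
qed

lemma good_list:
  assumes "xs \<noteq> []" "\<forall>z\<in>set xs. good (A z) (Oc z)"
  shows "good (\<lambda>n. \<Sum>z\<leftarrow>xs. A z n) (\<lambda>n. \<Sum>z\<leftarrow>xs. Oc z n)"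
  using assms
proof (induction xs)
  case Nil then show ?case by simp
next
  case (Cons z zs)
  show ?case
  proof (cases "zs = []")
    case True then show ?thesis using Cons.prems by simp
  next
    case False
    then have "good (\<lambda>n. \<Sum>z\<leftarrow>zs. A z n) (\<lambda>n. \<Sum>z\<leftarrow>zs. Oc z n)" using Cons by simp
    moreover have "good (A z) (Oc z)" using Cons.prems by simp
    ultimately show ?thesis using good_add[of "A z" "Oc z"] by simp
  qed
qed

lemma good_shift:
  assumes "good (\<lambda>n. A (Suc n)) (\<lambda>n. Oc (Suc n))" "A 0 > 0"
  shows "good A Oc"
proof -
  from assms obtain d C \<rho> where pA: "\<forall>n. A (Suc n) > 0" and C: "C > 0" "(\<lambda>n. A (Suc n) / real n ^ d) \<longlonglongrightarrow> C"
    and r: "(\<lambda>n. Oc (Suc n) / A (Suc n)) \<longlonglongrightarrow> \<rho>" unfolding good_def by blast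
  have "(\<lambda>n. A (Suc n) / real n ^ d * (real n / real (Suc n)) ^ d) \<longlonglongrightarrow> C * 1 ^ d"
    by (intro tendsto_intros C LIMSEQ_n_over_Suc_n)
  moreover have "eventually (\<lambda>n. A (Suc n) / real n ^ d * (real n / real (Suc n)) ^ d = A (Suc n) / real (Suc n) ^ d) sequentially"
    by (rule eventually_sequentiallyI[of 1]) (simp add: power_divide)
  ultimately have "(\<lambda>n. A (Suc n) / real (Suc n) ^ d) \<longlonglongrightarrow> C" by (auto intro: Lim_transform_eventually)
  hence "(\<lambda>n. A n / real n ^ d) \<longlonglongrightarrow> C" by (rule LIMSEQ_imp_Suc)
  moreover have "(\<lambda>n. Oc n / A n) \<longlonglongrightarrow> \<rho>" using r by (rule LIMSEQ_imp_Suc)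
  moreover have "\<forall>n. A n > 0" using pA assms(2) by (metis not0_implies_Suc)
  ultimately show ?thesis unfolding good_def using C(1) by blast
qed

lemma pow_diff_bounds:
  fixes n :: nat
  shows "real (Suc d) * real n ^ d \<le> real (Suc n) ^ Suc d - real n ^ Suc d"
    and "real (Suc n) ^ Suc d - real n ^ Suc d \<le> real (Suc d) * real (Suc n) ^ d"
proof -
  have e: "real (Suc n) ^ Suc d - real n ^ Suc d = (\<Sum>p<Suc d. real (Suc n) ^ p * real n ^ (d - p))"
    using diff_power_eq_sum[of "real (Suc n)" d "real n"] by simp
  have lo: "real n ^ d \<le> real (Suc n) ^ p * real n ^ (d - p)" if "p < Suc d" for p
  proof -
    have "real n ^ d = real n ^ p * real n ^ (d - p)" using that by (simp add: power_add[symmetric])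
    also have "\<dots> \<le> real (Suc n) ^ p * real n ^ (d - p)" by (intro mult_right_mono power_mono) auto
    finally show ?thesis .
  qed
  have hi: "real (Suc n) ^ p * real n ^ (d - p) \<le> real (Suc n) ^ d" if "p < Suc d" for p
  proof -
    have "real (Suc n) ^ p * real n ^ (d - p) \<le> real (Suc n) ^ p * real (Suc n) ^ (d - p)"
      by (intro mult_left_mono power_mono) auto
    also have "\<dots> = real (Suc n) ^ d" using that by (simp add: power_add[symmetric])
    finally show ?thesis .
  qed
  show "real (Suc d) * real n ^ d \<le> real (Suc n) ^ Suc d - real n ^ Suc d"
  proof -
    have "(\<Sum>p<Suc d. real n ^ d) \<le> (\<Sum>p<Suc d. real (Suc n) ^ p * real n ^ (d - p))"
      by (rule sum_mono) (rule lo, simp)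
    thus ?thesis unfolding e by simp
  qed
  show "real (Suc n) ^ Suc d - real n ^ Suc d \<le> real (Suc d) * real (Suc n) ^ d"
  proof -
    have "(\<Sum>p<Suc d. real (Suc n) ^ p * real n ^ (d - p)) \<le> (\<Sum>p<Suc d. real (Suc n) ^ d)"
      by (rule sum_mono) (rule hi, simp)
    thus ?thesis unfolding e by simp
  qed
qed

lemma pow_diff_lim:
  "(\<lambda>n. real n ^ d / (real (Suc n) ^ Suc d - real n ^ Suc d)) \<longlonglongrightarrow> 1 / real (Suc d)"
proof (rule real_tendsto_sandwich)
  show "(\<lambda>n. (real n / real (Suc n)) ^ d / real (Suc d)) \<longlonglongrightarrow> 1 / real (Suc d)"
    using tendsto_divide[OF tendsto_power[OF LIMSEQ_n_over_Suc_n, of d] tendsto_const[of "real (Suc d)"]] by simp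
  show "(\<lambda>n. 1 / real (Suc d)) \<longlonglongrightarrow> 1 / real (Suc d)" by simp
  show "eventually (\<lambda>n. (real n / real (Suc n)) ^ d / real (Suc d) \<le> real n ^ d / (real (Suc n) ^ Suc d - real n ^ Suc d)) sequentially"
  proof (rule always_eventually, rule allI)
    fix n
    have "real n ^ Suc d < real (Suc n) ^ Suc d" by (rule power_strict_mono) auto
    hence pos: "real (Suc n) ^ Suc d - real n ^ Suc d > 0" by simp
    have "(real n / real (Suc n)) ^ d / real (Suc d) = real n ^ d / (real (Suc d) * real (Suc n) ^ d)"
      by (simp add: power_divide)
    also have "\<dots> \<le> real n ^ d / (real (Suc n) ^ Suc d - real n ^ Suc d)"
      by (intro divide_left_mono pow_diff_bounds(2) mult_pos_pos pos) auto
    finally show "(real n / real (Suc n)) ^ d / real (Suc d) \<le> real n ^ d / (real (Suc n) ^ Suc d - real n ^ Suc d)" .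
  qed
  show "eventually (\<lambda>n. real n ^ d / (real (Suc n) ^ Suc d - real n ^ Suc d) \<le> 1 / real (Suc d)) sequentially"
  proof (rule always_eventually, rule allI)
    fix n
    have "real n ^ Suc d < real (Suc n) ^ Suc d" by (rule power_strict_mono) auto
    hence pos: "real (Suc n) ^ Suc d - real n ^ Suc d > 0" by simp
    show "real n ^ d / (real (Suc n) ^ Suc d - real n ^ Suc d) \<le> 1 / real (Suc d)"
      using pow_diff_bounds(1)[of d n] pos by (simp add: divide_simps mult.commute)
  qed
qed

lemma good_stolz:
  assumes g: "good g h" and rA: "\<And>n. A (Suc n) = A n + g n" and rO: "\<And>n. Oc (Suc n) = Oc n + h n"
    and A0: "A 0 > 0"
  shows "good A Oc"
proof -
  from g obtain d C \<rho> where pg: "\<forall>n. g n > 0" and C: "C > 0" "(\<lambda>n. g n / real n ^ d) \<longlonglongrightarrow> C"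
    and r: "(\<lambda>n. h n / g n) \<longlonglongrightarrow> \<rho>" unfolding good_def by blast
  have pA: "A n > 0" for n
    by (induction n) (use A0 pg rA in \<open>auto intro: add_pos_pos\<close>)
  have deg: "(\<lambda>n. A n / real n ^ Suc d) \<longlonglongrightarrow> C * (1 / real (Suc d))"
  proof (rule stolz)
    show "real n ^ Suc d < real (Suc n) ^ Suc d" for n by (rule power_strict_mono) auto
    show "filterlim (\<lambda>n. real n ^ Suc d) at_top sequentially"
      by (rule filterlim_pow_at_top) (auto intro: filterlim_real_sequentially)
    have "(\<lambda>n. g n / real n ^ d * (real n ^ d / (real (Suc n) ^ Suc d - real n ^ Suc d))) \<longlonglongrightarrow> C * (1 / real (Suc d))"
      by (intro tendsto_mult C pow_diff_lim)
    moreover have "eventually (\<lambda>n. g n / real n ^ d * (real n ^ d / (real (Suc n) ^ Suc d - real n ^ Suc d))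
        = (A (Suc n) - A n) / (real (Suc n) ^ Suc d - real n ^ Suc d)) sequentially"
    proof (rule eventually_sequentiallyI[of 1])
      fix n :: nat assume "n \<ge> 1"
      hence "real n ^ d > 0" by simp
      thus "g n / real n ^ d * (real n ^ d / (real (Suc n) ^ Suc d - real n ^ Suc d))
        = (A (Suc n) - A n) / (real (Suc n) ^ Suc d - real n ^ Suc d)" using rA[of n] by simp
    qed
    ultimately show "(\<lambda>n. (A (Suc n) - A n) / (real (Suc n) ^ Suc d - real n ^ Suc d)) \<longlonglongrightarrow> C * (1 / real (Suc d))"
      by (rule Lim_transform_eventually)
  qed
  have top: "filterlim A at_top sequentially"
  proof -
    have fl: "filterlim (\<lambda>n. A n / real n ^ Suc d * real n ^ Suc d) at_top sequentially"
    proof (rule filterlim_tendsto_pos_mult_at_top[OF deg])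
      show "0 < C * (1 / real (Suc d))" using C by simp
      show "filterlim (\<lambda>n. real n ^ Suc d) at_top sequentially"
        by (rule filterlim_pow_at_top) (auto intro: filterlim_real_sequentially)
    qed
    have ev: "eventually (\<lambda>n. A n / real n ^ Suc d * real n ^ Suc d = A n) sequentially"
      by (rule eventually_sequentiallyI[of 1]) simp
    show ?thesis using fl filterlim_cong[OF refl refl ev] by blast
  qed
  have rat: "(\<lambda>n. Oc n / A n) \<longlonglongrightarrow> \<rho>"
  proof (rule stolz)
    show "A n < A (Suc n)" for n using rA[of n] pg by (simp add: add_strict_increasing2)
    show "filterlim A at_top sequentially" by (rule top)
    show "(\<lambda>n. (Oc (Suc n) - Oc n) / (A (Suc n) - A n)) \<longlonglongrightarrow> \<rho>" using r by (simp add: rA rO)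
  qed
  have "C * (1 / real (Suc d)) > 0" using C by simp
  thus ?thesis unfolding good_def using pA deg rat by blast
qed

definition hom :: "('b list \<Rightarrow> 'c list) \<Rightarrow> bool" where
  "hom F \<longleftrightarrow> (\<forall>xs ys. F (xs @ ys) = F xs @ F ys)"

definition ne :: "('b list \<Rightarrow> 'c list) \<Rightarrow> bool" where
  "ne F \<longleftrightarrow> (\<forall>y. F [y] \<noteq> [])"

lemma hom_app: "hom F \<Longrightarrow> F (xs @ ys) = F xs @ F ys" by (simp add: hom_def)

lemma hom_Nil: assumes "hom F" shows "F [] = []"
proof -
  have "F [] = F [] @ F []" using hom_app[OF assms, of "[]" "[]"] by simp
  hence "length (F []) = length (F []) + length (F [])" by (metis length_append)
  thus ?thesis by simp
qed

lemma hom_concat: assumes "hom F" shows "F xs = concat (map (\<lambda>y. F [y]) xs)"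
proof (induction xs)
  case Nil then show ?case using hom_Nil[OF assms] by simp
next
  case (Cons x xs)
  have "F (x # xs) = F [x] @ F xs" using hom_app[OF assms, of "[x]" xs] by simp
  then show ?case using Cons by simp
qed

lemma hom_Cons: "hom F \<Longrightarrow> F (x # xs) = F [x] @ F xs"
  using hom_app[of F "[x]" xs] by simp

lemma hom_comp: "hom F \<Longrightarrow> hom G \<Longrightarrow> hom (F \<circ> G)" by (simp add: hom_def)

lemma hom_pow: "hom (F::'b list \<Rightarrow> 'b list) \<Longrightarrow> hom (F ^^ n)"
  by (induction n) (simp_all add: hom_def)

lemma morph_ext_hom: "hom (morph_ext phi)" by (simp add: hom_def morph_ext_def)

lemma ne_length: assumes "hom F" "ne F" shows "length xs \<le> length (F xs)"
proof (induction xs)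
  case Nil then show ?case by simp
next
  case (Cons x xs)
  have "F [x] \<noteq> []" using assms(2) by (simp add: ne_def)
  hence "length (F [x]) \<ge> 1" by (cases "F [x]") auto
  then show ?case using Cons hom_Cons[OF assms(1), of x xs] by simp
qed

lemma ne_pow: assumes "hom (F::'b list \<Rightarrow> 'b list)" "ne F" shows "ne (F ^^ n)"
proof (induction n)
  case 0 then show ?case by (simp add: ne_def)
next
  case (Suc n)
  show ?case unfolding ne_def
  proof
    fix y
    have "length (F [y]) \<ge> 1" using assms(2) by (cases "F [y]") (auto simp: ne_def)
    moreover have "length ((F ^^ Suc n) [y]) \<ge> length (F [y])"
      using ne_length[OF hom_pow[OF assms(1)] Suc, of "F [y]"] by (simp add: funpow_Suc_right del: funpow.simps)
    ultimately show "(F ^^ Suc n) [y] \<noteq> []" by auto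
  qed
qed

lemma count_concat: "count_list (concat xss) v = (\<Sum>xs\<leftarrow>xss. count_list xs v)"
  by (induction xss) auto

lemma hom_length: "hom F \<Longrightarrow> length (F xs) = (\<Sum>y\<leftarrow>xs. length (F [y]))"
  by (subst hom_concat) (auto simp: length_concat comp_def)

lemma hom_count: "hom F \<Longrightarrow> count_list (F xs) v = (\<Sum>y\<leftarrow>xs. count_list (F [y]) v)"
  by (subst hom_concat) (auto simp: count_concat comp_def)

lemma pow_Suc_apply: "(F ^^ Suc n) xs = (F ^^ n) (F xs)"
  by (simp add: funpow_Suc_right del: funpow.simps)

lemma of_nat_sum_list_map: "real (\<Sum>y\<leftarrow>xs. f y) = (\<Sum>y\<leftarrow>xs. real (f y))"
  by (induction xs) auto

lemma structure_good:
  assumes hF: "hom (F::'b list \<Rightarrow> 'b list)" and nF: "ne F" and wfr: "wf r"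
    and clos: "\<forall>y\<in>S. set (F [y]) \<subseteq> S"
    and str: "\<forall>y\<in>S. (\<forall>z\<in>set (F [y]). (z, y) \<in> r) \<or>
                 (\<exists>\<alpha> \<beta>. F [y] = \<alpha> @ y # \<beta> \<and> (\<forall>z\<in>set (\<alpha> @ \<beta>). (z, y) \<in> r))"
  shows "y \<in> S \<Longrightarrow> good (\<lambda>n. real (length ((F ^^ n) [y]))) (\<lambda>n. real (count_list ((F ^^ n) [y]) v))"
proof (induction y rule: wf_induct[OF wfr])
  case (1 y)
  note IH = 1(1)[rule_format] and yS = 1(2)
  have hp: "hom (F ^^ n)" for n by (rule hom_pow[OF hF])
  have nep: "(F ^^ n) [z] \<noteq> []" for n z using ne_pow[OF hF nF, of n] by (simp add: ne_def)
  have pos: "real (length ((F ^^ n) [z])) > 0" for n z using nep[of n z] by simp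
  show ?case
  proof (cases "\<forall>z\<in>set (F [y]). (z, y) \<in> r")
    case True
    have gz: "\<forall>z\<in>set (F [y]). good (\<lambda>n. real (length ((F ^^ n) [z]))) (\<lambda>n. real (count_list ((F ^^ n) [z]) v))"
      using IH True clos yS by blast
    have "F [y] \<noteq> []" using nF by (simp add: ne_def)
    from good_list[OF this gz]
    have "good (\<lambda>n. \<Sum>z\<leftarrow>F [y]. real (length ((F ^^ n) [z]))) (\<lambda>n. \<Sum>z\<leftarrow>F [y]. real (count_list ((F ^^ n) [z]) v))" .
    moreover have "real (length ((F ^^ Suc n) [y])) = (\<Sum>z\<leftarrow>F [y]. real (length ((F ^^ n) [z])))" for n
      unfolding pow_Suc_apply hom_length[OF hp[of n], of "F [y]"] of_nat_sum_list_map ..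
    moreover have "real (count_list ((F ^^ Suc n) [y]) v) = (\<Sum>z\<leftarrow>F [y]. real (count_list ((F ^^ n) [z]) v))" for n
      unfolding pow_Suc_apply hom_count[OF hp[of n], of "F [y]"] of_nat_sum_list_map ..
    ultimately have "good (\<lambda>n. real (length ((F ^^ Suc n) [y]))) (\<lambda>n. real (count_list ((F ^^ Suc n) [y]) v))"
      by simp
    thus ?thesis by (rule good_shift) simp
  next
    case False
    then obtain \<alpha> \<beta> where ab: "F [y] = \<alpha> @ y # \<beta>" and low: "\<forall>z\<in>set (\<alpha> @ \<beta>). (z, y) \<in> r"
      using str yS by blast
    have split: "(F ^^ Suc n) [y] = (F ^^ n) \<alpha> @ (F ^^ n) [y] @ (F ^^ n) \<beta>" for n
      unfolding pow_Suc_apply ab using hom_app[OF hp[of n], of \<alpha> "y # \<beta>"] hom_Cons[OF hp[of n], of y \<beta>] by simp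
    show ?thesis
    proof (cases "\<alpha> @ \<beta> = []")
      case True
      have c: "(F ^^ n) [y] = [y]" for n
      proof (induction n)
        case (Suc n) then show ?case using split[of n] True hom_Nil[OF hp] by simp
      qed simp
      have l1: "(\<lambda>n::nat. real (length [y]) / real n ^ 0) \<longlonglongrightarrow> 1" by simp
      have l2: "(\<lambda>n::nat. real (count_list [y] v) / real (length [y])) \<longlonglongrightarrow> real (count_list [y] v)" by simp
      have "(1::real) > 0" by simp
      show ?thesis unfolding good_def c using l1 l2 \<open>(1::real) > 0\<close>
        by (intro conjI allI) (simp, blast, blast)
    next
      case False
      have gz: "\<forall>z\<in>set (\<alpha> @ \<beta>). good (\<lambda>n. real (length ((F ^^ n) [z]))) (\<lambda>n. real (count_list ((F ^^ n) [z]) v))"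
      proof
        fix z assume z: "z \<in> set (\<alpha> @ \<beta>)"
        have "z \<in> set (F [y])" using z ab by auto
        hence "z \<in> S" using clos yS by blast
        then show "good (\<lambda>n. real (length ((F ^^ n) [z]))) (\<lambda>n. real (count_list ((F ^^ n) [z]) v))"
          using IH low z by blast
      qed
      from good_list[OF False gz]
      have g: "good (\<lambda>n. \<Sum>z\<leftarrow>\<alpha> @ \<beta>. real (length ((F ^^ n) [z]))) (\<lambda>n. \<Sum>z\<leftarrow>\<alpha> @ \<beta>. real (count_list ((F ^^ n) [z]) v))" .
      show ?thesis
      proof (rule good_stolz[OF g])
        fix n
        show "real (length ((F ^^ Suc n) [y])) = real (length ((F ^^ n) [y])) + (\<Sum>z\<leftarrow>\<alpha> @ \<beta>. real (length ((F ^^ n) [z])))"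
          unfolding split using hom_length[OF hp[of n], of \<alpha>] hom_length[OF hp[of n], of \<beta>]
          by (simp add: of_nat_sum_list_map)
        show "real (count_list ((F ^^ Suc n) [y]) v) = real (count_list ((F ^^ n) [y]) v) + (\<Sum>z\<leftarrow>\<alpha> @ \<beta>. real (count_list ((F ^^ n) [z]) v))"
          unfolding split using hom_count[OF hp[of n], of \<alpha>] hom_count[OF hp[of n], of \<beta>]
          by (simp add: of_nat_sum_list_map)
      next
        show "real (length ((F ^^ 0) [y])) > 0" by simp
      qed
    qed
  qed
qed

definition pre :: "(nat \<Rightarrow> 'b) \<Rightarrow> nat \<Rightarrow> 'b list" where "pre X M = map X [0..<M]"

definition fixpt :: "('b list \<Rightarrow> 'b list) \<Rightarrow> (nat \<Rightarrow> 'b) \<Rightarrow> bool" where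
  "fixpt F X \<longleftrightarrow> (\<forall>M. pre X (length (F (pre X M))) = F (pre X M))"

lemma length_pre[simp]: "length (pre X M) = M" by (simp add: pre_def)
lemma nth_pre[simp]: "i < M \<Longrightarrow> pre X M ! i = X i" by (simp add: pre_def)
lemma take_pre: "M \<le> N \<Longrightarrow> take M (pre X N) = pre X M"
  by (simp add: pre_def take_map)
lemma pre_Suc: "pre X (Suc M) = pre X M @ [X M]" by (simp add: pre_def)

lemma fixptD: "fixpt F X \<Longrightarrow> F (pre X M) = pre X (length (F (pre X M)))"
  by (simp add: fixpt_def)

lemma fixpt_pow: assumes "fixpt F X" shows "fixpt (F ^^ n) X"
proof (induction n)
  case 0 then show ?case by (simp add: fixpt_def)
next
  case (Suc n)
  show ?case unfolding fixpt_def
  proof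
    fix M :: nat
    have "(F ^^ Suc n) (pre X M) = F ((F ^^ n) (pre X M))" by simp
    also have "\<dots> = F (pre X (length ((F ^^ n) (pre X M))))" using fixptD[OF Suc] by metis
    also have "\<dots> = pre X (length (F (pre X (length ((F ^^ n) (pre X M))))))" using fixptD[OF assms] by metis
    finally show "pre X (length ((F ^^ Suc n) (pre X M))) = (F ^^ Suc n) (pre X M)" by simp
  qed
qed

definition pf :: "'b list \<Rightarrow> 'b list \<Rightarrow> bool" where "pf xs ys \<longleftrightarrow> (\<exists>zs. ys = xs @ zs)"

lemma pf_trans: "pf xs ys \<Longrightarrow> pf ys zs \<Longrightarrow> pf xs zs" by (auto simp: pf_def)
lemma pf_nth: "pf xs ys \<Longrightarrow> n < length xs \<Longrightarrow> xs ! n = ys ! n" by (auto simp: pf_def nth_append)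
lemma pf_take: "pf xs ys \<Longrightarrow> xs = take (length xs) ys" by (auto simp: pf_def)
lemma pf_len: "pf xs ys \<Longrightarrow> length xs \<le> length ys" by (auto simp: pf_def)

lemma hom_prefix: assumes "hom F" "pf xs ys" shows "pf (F xs) (F ys)"
proof -
  from assms(2) obtain zs where "ys = xs @ zs" by (auto simp: pf_def)
  then show ?thesis using hom_app[OF assms(1)] by (simp add: pf_def)
qed

lemma word_limit_fixpt:
  assumes ne: "non_erasing phi" and pb: "phi b = b # u" and u: "u \<noteq> []"
    and lim: "word_limit (\<lambda>i. (morph_ext phi ^^ i) [b]) w"
  shows "fixpt (morph_ext phi) w"
proof -
  define P where "P i = (morph_ext phi ^^ i) [b]" for i
  have hF: "hom (morph_ext phi)" by (rule morph_ext_hom)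
  have PS: "P (Suc i) = morph_ext phi (P i)" for i by (simp add: P_def)
  have step: "pf (P i) (P (Suc i))" for i
  proof (induction i)
    case 0 then show ?case by (simp add: P_def morph_ext_def pb pf_def)
  next
    case (Suc i)
    have "pf (morph_ext phi (P i)) (morph_ext phi (P (Suc i)))" by (rule hom_prefix[OF hF Suc])
    then show ?case by (simp add: PS)
  qed
  have mono: "pf (P i) (P j)" if "i \<le> j" for i j
    using that
  proof (induction j rule: dec_induct)
    case base then show ?case by (simp add: pf_def)
  next
    case (step n) then show ?case using pf_trans \<open>\<And>i. pf (P i) (P (Suc i))\<close> by blast
  qed
  have pw: "pre w (length (P i)) = P i" for i
  proof (rule nth_equalityI)
    show "length (pre w (length (P i))) = length (P i)" by simp
    fix n assume n: "n < length (pre w (length (P i)))"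
    from lim obtain i0 where i0: "\<forall>i'\<ge>i0. n < length (P i') \<and> P i' ! n = w n"
      unfolding word_limit_def P_def by blast
    have "pf (P i) (P (max i i0))" by (rule mono) simp
    hence "P i ! n = P (max i i0) ! n" using n by (simp add: pf_nth)
    thus "pre w (length (P i)) ! n = P i ! n" using i0 n by simp
  qed
  have hd: "\<exists>t. P i = b # t" for i
  proof (induction i)
    case 0 then show ?case by (simp add: P_def)
  next
    case (Suc i)
    then obtain t where "P i = b # t" by blast
    then show ?case by (simp add: PS morph_ext_def pb)
  qed
  have len: "length (P i) \<ge> Suc i" for i
  proof (induction i)
    case 0 then show ?case by (simp add: P_def)
  next
    case (Suc i)
    obtain t where t: "P i = b # t" using hd by blast
    have "length (morph_ext phi t) \<ge> length t"
      using ne_length[OF hF, of t] ne by (simp add: ne_def non_erasing_def morph_ext_def)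
    moreover have "P (Suc i) = b # u @ morph_ext phi t" by (simp add: PS t morph_ext_def pb)
    ultimately have "length (P (Suc i)) \<ge> length (P i) + 1" using u t by (cases u) auto
    then show ?case using Suc by simp
  qed
  show ?thesis unfolding fixpt_def
  proof
    fix M :: nat
    define i where "i = M"
    have Mle: "M \<le> length (P i)" using len[of i] by (simp add: i_def)
    have pM: "pre w M = take M (P i)" using take_pre[OF Mle, of w] pw[of i] by simp
    have "pf (pre w M) (P i)" unfolding pM pf_def by (metis append_take_drop_id)
    hence "pf (morph_ext phi (pre w M)) (morph_ext phi (P i))" by (rule hom_prefix[OF hF])
    hence pr: "pf (morph_ext phi (pre w M)) (pre w (length (P (Suc i))))" using pw[of "Suc i"] by (simp add: PS)
    then have le: "length (morph_ext phi (pre w M)) \<le> length (P (Suc i))" using pf_len by fastforce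
    from pr have "morph_ext phi (pre w M) = take (length (morph_ext phi (pre w M))) (pre w (length (P (Suc i))))"
      by (rule pf_take)
    also have "\<dots> = pre w (length (morph_ext phi (pre w M)))" by (rule take_pre[OF le])
    finally show "pre w (length (morph_ext phi (pre w M))) = morph_ext phi (pre w M)" by simp
  qed
qed

definition kb :: "nat \<Rightarrow> 'b list \<Rightarrow> nat \<Rightarrow> 'b list list" where
  "kb k xs m = map (\<lambda>j. take k (drop j xs)) [0..<m]"

definition Kmor :: "nat \<Rightarrow> ('a \<Rightarrow> 'a list) \<Rightarrow> 'a list \<Rightarrow> 'a list list" where
  "Kmor k phi y = (if length y = k then kb k (morph_ext phi y) (length (phi (hd y))) else [y])"

lemma length_kb[simp]: "length (kb k xs m) = m" by (simp add: kb_def)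
lemma nth_kb[simp]: "j < m \<Longrightarrow> kb k xs m ! j = take k (drop j xs)" by (simp add: kb_def)

lemma kb_add: "kb k xs (a + b) = kb k xs a @ map (\<lambda>j. take k (drop (a + j) xs)) [0..<b]"
  by (rule nth_equalityI) (auto simp: nth_append)

lemma kb_take: "L + k \<le> T + 1 \<Longrightarrow> kb k (take T xs) L = kb k xs L"
  by (rule nth_equalityI) (auto simp: take_drop min_def)

lemma morph_ext_Cons: "morph_ext phi (x # xs) = phi x @ morph_ext phi xs"
  by (simp add: morph_ext_def)
lemma morph_ext_append: "morph_ext phi (xs @ ys) = morph_ext phi xs @ morph_ext phi ys"
  by (simp add: morph_ext_def)
lemma morph_ext_len: "non_erasing phi \<Longrightarrow> length xs \<le> length (morph_ext phi xs)"
proof (induction xs)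
  case (Cons x xs)
  then have "phi x \<noteq> []" by (simp add: non_erasing_def)
  then show ?case using Cons by (cases "phi x") (auto simp: morph_ext_Cons)
qed (simp add: morph_ext_def)

lemma KB:
  assumes k: "0 < k" and ne: "non_erasing phi" and len: "M + k \<le> length xs + 1"
  shows "morph_ext (Kmor k phi) (kb k xs M) = kb k (morph_ext phi xs) (length (morph_ext phi (take M xs)))"
  using len
proof (induction M)
  case 0 then show ?case by (simp add: morph_ext_def kb_def)
next
  case (Suc M)
  have Mlt: "M < length xs" using Suc.prems k by simp
  define y where "y = take k (drop M xs)"
  have ly: "length y = k" using Suc.prems by (simp add: y_def)
  have hy: "hd y = xs ! M" using Mlt k by (simp add: y_def hd_drop_conv_nth)
  have kbS: "kb k xs (Suc M) = kb k xs M @ [y]" by (simp add: kb_def y_def)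
  have tS: "take (Suc M) xs = take M xs @ [xs ! M]" using Mlt by (simp add: take_Suc_conv_app_nth)
  define L where "L = length (morph_ext phi (take M xs))"
  have lS: "length (morph_ext phi (take (Suc M) xs)) = L + length (phi (xs ! M))"
    by (simp add: tS morph_ext_append morph_ext_def L_def)
  have Ky: "Kmor k phi y = kb k (morph_ext phi y) (length (phi (xs ! M)))"
    by (simp add: Kmor_def ly hy)
  have "morph_ext (Kmor k phi) (kb k xs (Suc M)) = kb k (morph_ext phi xs) L @ Kmor k phi y"
    using Suc by (simp add: kbS morph_ext_append L_def) (simp add: morph_ext_def)
  also have "\<dots> = kb k (morph_ext phi xs) (L + length (phi (xs ! M)))"
    unfolding kb_add Ky
  proof (rule arg_cong[where f="\<lambda>z. kb k (morph_ext phi xs) L @ z"], rule nth_equalityI)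
    fix j assume "j < length (kb k (morph_ext phi y) (length (phi (xs ! M))))"
    hence j: "j < length (phi (xs ! M))" by simp
    have xs: "xs = take M xs @ y @ drop (M + k) xs" by (simp add: y_def) (metis append_take_drop_id drop_drop add.commute)
    have ey: "morph_ext phi y = phi (xs ! M) @ morph_ext phi (tl y)"
      using ly k hy by (cases y) (auto simp: morph_ext_Cons)
    have "length (morph_ext phi (tl y)) \<ge> k - 1" using morph_ext_len[OF ne, of "tl y"] ly by simp
    hence jk: "j + k \<le> length (morph_ext phi y)" using j ey by simp
    have "morph_ext phi xs = morph_ext phi (take M xs) @ morph_ext phi y @ morph_ext phi (drop (M + k) xs)"
      by (subst xs) (simp add: morph_ext_append)
    hence "take k (drop (L + j) (morph_ext phi xs)) = take k (drop j (morph_ext phi y @ morph_ext phi (drop (M + k) xs)))"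
      by (simp add: L_def)
    also have "\<dots> = take k (drop j (morph_ext phi y))" using jk by simp
    finally show "kb k (morph_ext phi y) (length (phi (xs ! M))) ! j = map (\<lambda>j. take k (drop (L + j) (morph_ext phi xs))) [0..<length (phi (xs ! M))] ! j"
      using j by simp
  qed simp
  finally show ?case using lS by simp
qed

lemma KB_pow:
  assumes k: "0 < k" and ne: "non_erasing phi" and len: "M + k \<le> length xs + 1"
  shows "(morph_ext (Kmor k phi) ^^ n) (kb k xs M) = kb k ((morph_ext phi ^^ n) xs) (length ((morph_ext phi ^^ n) (take M xs)))"
proof (induction n)
  case 0 have "M \<le> length xs" using len k by simp
  then show ?case by (simp add: min_def)
next
  case (Suc n)
  define X where "X = (morph_ext phi ^^ n) xs"
  define L where "L = length ((morph_ext phi ^^ n) (take M xs))"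
  have hp: "hom (morph_ext phi ^^ n)" by (rule hom_pow[OF morph_ext_hom])
  have nep: "ne (morph_ext phi ^^ n)"
    by (rule ne_pow[OF morph_ext_hom]) (use ne in \<open>auto simp: ne_def non_erasing_def morph_ext_def\<close>)
  have XL: "X = (morph_ext phi ^^ n) (take M xs) @ (morph_ext phi ^^ n) (drop M xs)"
    unfolding X_def using hom_app[OF hp, of "take M xs" "drop M xs"] by simp
  have "length ((morph_ext phi ^^ n) (drop M xs)) \<ge> length (drop M xs)"
    by (rule ne_length[OF hp nep])
  hence lenX: "L + k \<le> length X + 1" using XL len unfolding L_def by simp
  have tX: "take L X = (morph_ext phi ^^ n) (take M xs)" using XL L_def by simp
  have "(morph_ext (Kmor k phi) ^^ Suc n) (kb k xs M) = morph_ext (Kmor k phi) (kb k X L)"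
    using Suc by (simp add: X_def L_def)
  also have "\<dots> = kb k (morph_ext phi X) (length (morph_ext phi (take L X)))" by (rule KB[OF k ne lenX])
  also have "\<dots> = kb k (morph_ext phi X) (length (morph_ext phi ((morph_ext phi ^^ n) (take M xs))))"
    by (simp only: tX)
  finally show ?case by (simp add: X_def)
qed

definition Wk :: "nat \<Rightarrow> (nat \<Rightarrow> 'a) \<Rightarrow> nat \<Rightarrow> 'a list" where
  "Wk k w i = map (\<lambda>j. w (i + j)) [0..<k]"

lemma length_Wk[simp]: "length (Wk k w i) = k" by (simp add: Wk_def)

lemma pre_W: "0 < k \<Longrightarrow> pre (Wk k w) M = kb k (pre w (M + k - 1)) M"
proof (rule nth_equalityI)
  fix i assume k: "0 < k" and i: "i < length (pre (Wk k w) M)"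
  show "pre (Wk k w) M ! i = kb k (pre w (M + k - 1)) M ! i"
  proof (rule nth_equalityI)
    show "length (pre (Wk k w) M ! i) = length (kb k (pre w (M + k - 1)) M ! i)" using i k by simp
    fix j assume "j < length (pre (Wk k w) M ! i)"
    then show "pre (Wk k w) M ! i ! j = kb k (pre w (M + k - 1)) M ! i ! j" using i k
      by (simp add: Wk_def)
  qed
qed simp

lemma Kmor_ne: "non_erasing phi \<Longrightarrow> ne (morph_ext (Kmor k phi))"
  unfolding ne_def morph_ext_def Kmor_def kb_def non_erasing_def by simp

lemma ne_morph_ext: "non_erasing phi \<Longrightarrow> ne (morph_ext phi)"
  unfolding ne_def morph_ext_def non_erasing_def by simp

lemma W_pow:
  assumes k: "0 < k" and ne: "non_erasing phi" and fp: "fixpt (morph_ext phi ^^ n) w"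
  shows "(morph_ext (Kmor k phi) ^^ n) (pre (Wk k w) M) = pre (Wk k w) (length ((morph_ext phi ^^ n) (pre w M)))"
proof -
  define G where "G = morph_ext phi ^^ n"
  have hG: "hom G" unfolding G_def by (rule hom_pow[OF morph_ext_hom])
  have nG: "ne G" unfolding G_def by (rule ne_pow[OF morph_ext_hom ne_morph_ext[OF ne]])
  define L where "L = length (G (pre w M))"
  define L' where "L' = length (G (pre w (M + k - 1)))"
  have tk: "take M (pre w (M + k - 1)) = pre w M" by (rule take_pre) (use k in simp)
  have sp: "pre w (M + k - 1) = pre w M @ drop M (pre w (M + k - 1))"
    using tk by (metis append_take_drop_id)
  have "length (G (drop M (pre w (M + k - 1)))) \<ge> k - 1"
    using ne_length[OF hG nG, of "drop M (pre w (M + k - 1))"] k by simp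
  moreover have "G (pre w (M + k - 1)) = G (pre w M) @ G (drop M (pre w (M + k - 1)))"
    using hom_app[OF hG, of "pre w M" "drop M (pre w (M + k - 1))"] sp by simp
  ultimately have LL: "L + k - 1 \<le> L'" unfolding L_def L'_def by simp
  have "(morph_ext (Kmor k phi) ^^ n) (pre (Wk k w) M) = kb k (G (pre w (M + k - 1))) L"
    unfolding pre_W[OF k] using KB_pow[OF k ne, of M "pre w (M + k - 1)" n] k tk
    by (simp add: G_def L_def)
  also have "G (pre w (M + k - 1)) = pre w L'"
    unfolding L'_def G_def using fixptD[OF fp] by metis
  also have "kb k (pre w L') L = kb k (take (L + k - 1) (pre w L')) L"
    by (rule kb_take[symmetric]) simp
  also have "take (L + k - 1) (pre w L') = pre w (L + k - 1)" by (rule take_pre[OF LL])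
  also have "kb k (pre w (L + k - 1)) L = pre (Wk k w) L" by (rule pre_W[OF k, symmetric])
  finally show ?thesis by (simp add: L_def G_def)
qed

lemma fixpt_W:
  assumes k: "0 < k" and ne: "non_erasing phi" and fp: "fixpt (morph_ext phi ^^ n) w"
  shows "fixpt (morph_ext (Kmor k phi) ^^ n) (Wk k w)"
  unfolding fixpt_def using W_pow[OF assms] by simp

lemma K_letter:
  assumes k: "0 < k" and ne: "non_erasing phi" and ly: "length y = k"
  shows "(morph_ext (Kmor k phi) ^^ n) [y] = kb k ((morph_ext phi ^^ n) y) (length ((morph_ext phi ^^ n) [hd y]))"
proof -
  have y1: "[y] = kb k y 1" using ly by (simp add: kb_def)
  have t1: "take 1 y = [hd y]" using ly k by (cases y) auto
  show ?thesis unfolding y1 using KB_pow[OF k ne, of 1 y n] ly t1 by simp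
qed

lemma count_list_filter: "count_list xs v = length (filter (\<lambda>x. x = v) xs)"
  by (induction xs) auto

lemma count_list_pre: "count_list (pre X N) v = card {i. i < N \<and> X i = v}"
  unfolding count_list_filter length_filter_conv_card
  by (rule arg_cong[where f=card]) auto

lemma occ_count_W: "occ_count w v N = count_list (pre (Wk (length v) w) N) v"
proof -
  have e: "occurs_at w v i \<longleftrightarrow> Wk (length v) w i = v" for i
  proof
    assume "occurs_at w v i"
    thus "Wk (length v) w i = v" unfolding occurs_at_def Wk_def by (intro nth_equalityI) auto
  next
    assume h: "Wk (length v) w i = v"
    show "occurs_at w v i" unfolding occurs_at_def
    proof (intro allI impI)
      fix j assume j: "j < length v"
      have "Wk (length v) w i ! j = v ! j" by (rule arg_cong[where f="\<lambda>l. l ! j", OF h])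
      thus "w (i + j) = v ! j" using j by (simp add: Wk_def)
    qed
  qed
  have "{i. i < N \<and> occurs_at w v i} = {i. i < N \<and> Wk (length v) w i = v}" using e by blast
  thus ?thesis unfolding occ_count_def count_list_pre by simp
qed

lemma sandwich:
  fixes F L :: "nat \<Rightarrow> nat" and lo hi :: "nat \<Rightarrow> real"
  assumes Fm: "mono F" and Lm: "mono L" and Lub: "\<And>B. \<exists>M. L M > B"
    and Lpos: "\<And>M. L (Suc M) > 0"
    and lo: "\<And>M. lo M \<le> real (F (L M))" and hi: "\<And>M. real (F (L M)) \<le> hi M" and lo0: "\<And>M. 0 \<le> lo M"
    and limlo: "(\<lambda>M. lo M / real (L (Suc M))) \<longlonglongrightarrow> \<alpha>"
    and limhi: "(\<lambda>M. hi (Suc M) / real (L M)) \<longlonglongrightarrow> \<beta>"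
    and e: "e > 0"
  shows "\<exists>N0. \<forall>N\<ge>N0. \<alpha> - e \<le> real (F N) / real N \<and> real (F N) / real N \<le> \<beta> + e"
proof -
  from LIMSEQ_D[OF limlo e] obtain M1 where M1: "\<And>M. M \<ge> M1 \<Longrightarrow> \<bar>lo M / real (L (Suc M)) - \<alpha>\<bar> < e" by auto
  from LIMSEQ_D[OF limhi e] obtain M2 where M2: "\<And>M. M \<ge> M2 \<Longrightarrow> \<bar>hi (Suc M) / real (L M) - \<beta>\<bar> < e" by auto
  define M0 where "M0 = max (max M1 M2) 1"
  have LM0: "L M0 > 0" using Lpos[of "M0 - 1"] by (simp add: M0_def)
  show ?thesis
  proof (intro exI allI impI)
    fix N assume N: "N \<ge> L M0"
    define S where "S = {M. L M \<le> N}"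
    obtain Mb where Mb: "L Mb > N" using Lub by blast
    have Sfin: "finite S"
    proof (rule finite_subset[of S "{..<Mb}"])
      show "S \<subseteq> {..<Mb}"
      proof
        fix M assume "M \<in> S"
        hence "L M \<le> N" by (simp add: S_def)
        show "M \<in> {..<Mb}"
        proof (rule ccontr)
          assume "M \<notin> {..<Mb}"
          hence "Mb \<le> M" by simp
          hence "L Mb \<le> L M" using Lm by (simp add: mono_def)
          thus False using Mb \<open>L M \<le> N\<close> by simp
        qed
      qed
    qed simp
    have M0S: "M0 \<in> S" using N by (simp add: S_def)
    define M where "M = Max S"
    have MS: "M \<in> S" unfolding M_def using Sfin M0S by (auto intro: Max_in)
    have MM0: "M \<ge> M0" unfolding M_def using Sfin M0S by (simp add: Max_ge)
    have LMN: "L M \<le> N" using MS by (simp add: S_def)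
    have NL: "N < L (Suc M)"
    proof (rule ccontr)
      assume "\<not> N < L (Suc M)"
      hence "Suc M \<in> S" by (simp add: S_def)
      hence "Suc M \<le> M" unfolding M_def using Sfin by (simp add: Max_ge)
      thus False by simp
    qed
    have LMpos: "L M > 0" using LM0 MM0 Lm by (metis le_trans mono_def not_le)
    have Npos: "real N > 0" using LMpos LMN by simp
    have F1: "real (F (L M)) \<le> real (F N)" using Fm LMN by (simp add: mono_def)
    have F2: "real (F N) \<le> real (F (L (Suc M)))" using Fm NL by (simp add: mono_def)
    have "\<alpha> - e < lo M / real (L (Suc M))" using M1[of M] MM0 by (simp add: M0_def)
    also have "\<dots> \<le> lo M / real N"
      using lo0[of M] NL Npos by (intro divide_left_mono) auto
    also have "\<dots> \<le> real (F N) / real N" using lo[of M] F1 Npos by (intro divide_right_mono) auto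
    finally have A: "\<alpha> - e \<le> real (F N) / real N" by simp
    have "real (F N) / real N \<le> hi (Suc M) / real N" using hi[of "Suc M"] F2 Npos by (intro divide_right_mono) auto
    also have "\<dots> \<le> hi (Suc M) / real (L M)"
    proof (rule divide_left_mono)
      show "0 \<le> hi (Suc M)" using hi[of "Suc M"] by (smt (verit) of_nat_0_le_iff)
    qed (use LMN LMpos in auto)
    also have "\<dots> < \<beta> + e" using M2[of M] MM0 by (simp add: M0_def)
    finally have B: "real (F N) / real N \<le> \<beta> + e" by simp
    show "\<alpha> - e \<le> real (F N) / real N \<and> real (F N) / real N \<le> \<beta> + e" using A B by simp
  qed
qed

lemma kb_prefix: "a + k \<le> length P + 1 \<or> a = 0 \<Longrightarrow> kb k (P @ Q) a = kb k P a"
  by (rule nth_equalityI) (auto simp: kb_def)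

lemma kb_bounds:
  assumes "length P = l" and k: "0 < k"
  shows "count_list (kb k P (l + 1 - k)) v \<le> count_list (kb k (P @ Q) l) v"
    and "count_list (kb k (P @ Q) l) v \<le> count_list (kb k P (l + 1 - k)) v + k"
proof -
  define a where "a = l + 1 - k"
  have al: "a \<le> l" using k by (simp add: a_def)
  have "kb k (P @ Q) l = kb k (P @ Q) (a + (l - a))" using al by simp
  also have "\<dots> = kb k P a @ map (\<lambda>j. take k (drop (a + j) (P @ Q))) [0..<l - a]"
    unfolding kb_add by (subst kb_prefix) (auto simp: a_def assms)
  finally have e: "kb k (P @ Q) l = kb k P a @ map (\<lambda>j. take k (drop (a + j) (P @ Q))) [0..<l - a]" .
  have "count_list (map (\<lambda>j. take k (drop (a + j) (P @ Q))) [0..<l - a]) v \<le> l - a"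
    using count_le_length by (metis length_map length_upt minus_nat.diff_0)
  moreover have "l - a \<le> k" by (simp add: a_def)
  ultimately show "count_list (kb k P (l + 1 - k)) v \<le> count_list (kb k (P @ Q) l) v"
    and "count_list (kb k (P @ Q) l) v \<le> count_list (kb k P (l + 1 - k)) v + k"
    unfolding e a_def[symmetric] by simp_all
qed

definition cnt :: "(nat \<Rightarrow> 'a) \<Rightarrow> 'a \<Rightarrow> nat \<Rightarrow> real" where
  "cnt w a M = real (count_list (pre w M) a)"

lemma cnt_Suc: "cnt w a (Suc M) = cnt w a M + (if w M = a then 1 else 0)"
  by (simp add: cnt_def pre_Suc)

lemma sum_map_pre: "(\<Sum>y\<leftarrow>pre X M. h y) = (\<Sum>j<M. h (X j))"
  by (induction M) (auto simp: pre_Suc pre_def)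

lemma sum_by_letter:
  fixes h :: "'a::finite \<Rightarrow> real"
  shows "(\<Sum>j<M. h (w j)) = (\<Sum>a\<in>UNIV. h a * cnt w a M)"
proof (induction M)
  case 0 then show ?case by (simp add: cnt_def pre_def)
next
  case (Suc M)
  have "(\<Sum>a\<in>UNIV. h a * cnt w a (Suc M)) = (\<Sum>a\<in>UNIV. h a * cnt w a M + (if w M = a then h a else 0))"
    by (rule sum.cong) (auto simp: cnt_Suc algebra_simps)
  also have "\<dots> = (\<Sum>a\<in>UNIV. h a * cnt w a M) + h (w M)"
    by (simp add: sum.distrib)
  finally show ?case using Suc by simp
qed

lemma lim_by_letter:
  fixes h :: "'a::finite \<Rightarrow> real"
  assumes freq: "\<And>a. (\<lambda>M. cnt w a M / real M) \<longlonglongrightarrow> f a"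
  shows "(\<lambda>M. (\<Sum>a\<in>UNIV. h a * cnt w a M) / real M) \<longlonglongrightarrow> (\<Sum>a\<in>UNIV. h a * f a)"
    and "(\<lambda>M. (\<Sum>a\<in>UNIV. h a * cnt w a (Suc M)) / real M) \<longlonglongrightarrow> (\<Sum>a\<in>UNIV. h a * f a)"
proof -
  have "(\<lambda>M. (\<Sum>a\<in>UNIV. h a * (cnt w a M / real M))) \<longlonglongrightarrow> (\<Sum>a\<in>UNIV. h a * f a)"
    by (intro tendsto_intros freq)
  thus "(\<lambda>M. (\<Sum>a\<in>UNIV. h a * cnt w a M) / real M) \<longlonglongrightarrow> (\<Sum>a\<in>UNIV. h a * f a)"
    by (simp add: sum_divide_distrib)
  have s: "(\<lambda>M. cnt w a (Suc M) / real M) \<longlonglongrightarrow> f a" for a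
  proof -
    have "(\<lambda>M. cnt w a (Suc M) / real (Suc M) * (real (Suc M) / real M)) \<longlonglongrightarrow> f a * 1"
      by (intro tendsto_intros LIMSEQ_Suc[OF freq] LIMSEQ_Suc_n_over_n)
    moreover have "eventually (\<lambda>M. cnt w a (Suc M) / real (Suc M) * (real (Suc M) / real M) = cnt w a (Suc M) / real M) sequentially"
      by (rule eventually_sequentiallyI[of 1]) simp
    ultimately show ?thesis by (auto intro: Lim_transform_eventually)
  qed
  have "(\<lambda>M. (\<Sum>a\<in>UNIV. h a * (cnt w a (Suc M) / real M))) \<longlonglongrightarrow> (\<Sum>a\<in>UNIV. h a * f a)"
    by (intro tendsto_intros s)
  thus "(\<lambda>M. (\<Sum>a\<in>UNIV. h a * cnt w a (Suc M)) / real M) \<longlonglongrightarrow> (\<Sum>a\<in>UNIV. h a * f a)"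
    by (simp add: sum_divide_distrib)
qed

lemma count_pre_mono: "mono (\<lambda>N. count_list (pre X N) v)"
proof (rule monoI)
  fix N N' :: nat assume "N \<le> N'"
  then show "count_list (pre X N) v \<le> count_list (pre X N') v"
    by (induction N' rule: dec_induct) (auto simp: pre_Suc le_SucI)
qed

lemma caseA_level:
  fixes phi :: "'a::finite \<Rightarrow> 'a list" and w :: "nat \<Rightarrow> 'a"
  assumes k: "0 < k" and ne: "non_erasing phi" and fp: "fixpt (morph_ext phi) w"
    and freq: "\<And>a. (\<lambda>M. cnt w a M / real M) \<longlonglongrightarrow> f a"
    and lam: "(\<Sum>a\<in>UNIV. real (length ((morph_ext phi ^^ n) [a])) * f a) > 0"
    and e: "e > 0"
  shows "\<exists>\<alpha> \<beta> N0. \<beta> - \<alpha> = real k * (\<Sum>a\<in>UNIV. f a) / (\<Sum>a\<in>UNIV. real (length ((morph_ext phi ^^ n) [a])) * f a)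
     \<and> (\<forall>N\<ge>N0. \<alpha> - e \<le> real (count_list (pre (Wk k w) N) v) / real N
                 \<and> real (count_list (pre (Wk k w) N) v) / real N \<le> \<beta> + e)"
proof -
  define G where "G = morph_ext phi ^^ n"
  define K where "K = morph_ext (Kmor k phi) ^^ n"
  define W where "W = Wk k w"
  define l where "l a = length (G [a])" for a
  define g where "g a = count_list (kb k (G [a]) (l a + 1 - k)) v" for a
  define F where "F N = count_list (pre W N) v" for N
  define L where "L M = length (G (pre w M))" for M
  define lam where "lam = (\<Sum>a\<in>UNIV. real (l a) * f a)"
  define mu where "mu = (\<Sum>a\<in>UNIV. real (g a) * f a)"
  define mu' where "mu' = (\<Sum>a\<in>UNIV. (real (g a) + real k) * f a)"
  have lam_pos: "lam > 0" using lam by (simp add: lam_def l_def G_def)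
  have hG: "hom G" unfolding G_def by (rule hom_pow[OF morph_ext_hom])
  have hK: "hom K" unfolding K_def by (rule hom_pow[OF morph_ext_hom])
  have nG: "ne G" unfolding G_def by (rule ne_pow[OF morph_ext_hom ne_morph_ext[OF ne]])
  have fpn: "fixpt G w" unfolding G_def by (rule fixpt_pow[OF fp])
  have l1: "l a \<ge> 1" for a using nG by (cases "G [a]") (auto simp: l_def ne_def)
  have key: "F (L M) = (\<Sum>j<M. count_list (K [W j]) v)" for M
  proof -
    have "pre W (L M) = K (pre W M)" unfolding W_def K_def L_def G_def
      using W_pow[OF k ne fixpt_pow[OF fp, of n]] by simp
    hence "F (L M) = count_list (K (pre W M)) v" by (simp add: F_def)
    also have "\<dots> = (\<Sum>y\<leftarrow>pre W M. count_list (K [y]) v)" by (rule hom_count[OF hK])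
    also have "\<dots> = (\<Sum>j<M. count_list (K [W j]) v)" by (rule sum_map_pre)
    finally show ?thesis .
  qed
  have bnd: "g (w j) \<le> count_list (K [W j]) v \<and> count_list (K [W j]) v \<le> g (w j) + k" for j
  proof -
    have hd: "hd (W j) = w j" using k by (simp add: W_def Wk_def hd_map)
    have KW: "K [W j] = kb k (G (W j)) (l (w j))" unfolding K_def G_def l_def
      using K_letter[OF k ne, of "W j" n] hd by (simp add: W_def)
    have "W j \<noteq> []" using k by (metis W_def length_Wk list.size(3) less_irrefl)
    hence Wc: "W j = w j # tl (W j)" using hd by (metis list.collapse)
    have GW: "G (W j) = G [w j] @ G (tl (W j))" by (subst Wc) (rule hom_Cons[OF hG])
    show ?thesis unfolding KW GW g_def using kb_bounds[where P="G [w j]" and l="l (w j)" and k=k and v=v and Q="G (tl (W j))"] k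
      by (simp add: l_def)
  qed
  have Lsum: "L M = (\<Sum>j<M. l (w j))" for M
    unfolding L_def using hom_length[OF hG, of "pre w M"] sum_map_pre[of "\<lambda>y. length (G [y])" w M]
    by (simp add: l_def)
  define lo where "lo M = (\<Sum>a\<in>UNIV. real (g a) * cnt w a M)" for M
  define hi where "hi M = (\<Sum>a\<in>UNIV. (real (g a) + real k) * cnt w a M)" for M
  have Lr: "real (L M) = (\<Sum>a\<in>UNIV. real (l a) * cnt w a M)" for M
    unfolding Lsum of_nat_sum using sum_by_letter[where h="\<lambda>a. real (l a)" and M=M and w=w] by simp
  have lo_eq: "lo M = (\<Sum>j<M. real (g (w j)))" for M unfolding lo_def by (rule sum_by_letter[symmetric])
  have hi_eq: "hi M = (\<Sum>j<M. real (g (w j)) + real k)" for M unfolding hi_def by (rule sum_by_letter[symmetric])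
  have LS: "L (Suc M) = L M + l (w M)" for M by (simp add: Lsum)
  have Lge: "L M \<ge> M" for M
  proof (induction M)
    case (Suc M) then show ?case using LS[of M] l1[of "w M"] by simp
  qed simp
  have sand: "\<exists>N0. \<forall>N\<ge>N0. mu / lam - e \<le> real (F N) / real N \<and> real (F N) / real N \<le> mu' / lam + e"
  proof (rule sandwich[where L=L and lo=lo and hi=hi])
    show "mono F" unfolding F_def by (rule count_pre_mono)
    show "mono L" by (rule monoI, erule dec_induct) (auto simp: LS intro: le_trans)
    show "\<exists>M. L M > B" for B using Lge[of "Suc B"] by (intro exI[of _ "Suc B"]) simp
    show "L (Suc M) > 0" for M using Lge[of "Suc M"] by simp
    show "lo M \<le> real (F (L M))" for M
      unfolding lo_eq key of_nat_sum using bnd by (intro sum_mono) auto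
    show "real (F (L M)) \<le> hi M" for M
      unfolding hi_eq key of_nat_sum using bnd by (intro sum_mono) (metis of_nat_add of_nat_le_iff)
    show "0 \<le> lo M" for M unfolding lo_eq by (intro sum_nonneg) auto
    show "e > 0" by (rule e)
    have "(\<lambda>M. (lo M / real M) / (real (L (Suc M)) / real M)) \<longlonglongrightarrow> mu / lam"
      unfolding lo_def Lr mu_def lam_def
      by (intro tendsto_divide lim_by_letter[OF freq]) (use lam_pos in \<open>simp add: lam_def\<close>)
    moreover have "eventually (\<lambda>M. (lo M / real M) / (real (L (Suc M)) / real M) = lo M / real (L (Suc M))) sequentially"
      by (rule eventually_sequentiallyI[of 1]) simp
    ultimately show "(\<lambda>M. lo M / real (L (Suc M))) \<longlonglongrightarrow> mu / lam" by (rule Lim_transform_eventually)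
    have "(\<lambda>M. (hi (Suc M) / real M) / (real (L M) / real M)) \<longlonglongrightarrow> mu' / lam"
      unfolding hi_def Lr mu'_def lam_def
      by (intro tendsto_divide lim_by_letter[OF freq]) (use lam_pos in \<open>simp add: lam_def\<close>)
    moreover have "eventually (\<lambda>M. (hi (Suc M) / real M) / (real (L M) / real M) = hi (Suc M) / real (L M)) sequentially"
      by (rule eventually_sequentiallyI[of 1]) simp
    ultimately show "(\<lambda>M. hi (Suc M) / real (L M)) \<longlonglongrightarrow> mu' / lam" by (rule Lim_transform_eventually)
  qed
  have diff: "mu' / lam - mu / lam = real k * (\<Sum>a\<in>UNIV. f a) / lam"
  proof -
    have "mu' = mu + real k * (\<Sum>a\<in>UNIV. f a)"
      unfolding mu'_def mu_def by (simp add: distrib_right sum.distrib sum_distrib_left)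
    thus ?thesis by (simp add: add_divide_distrib)
  qed
  show ?thesis using sand diff unfolding F_def W_def lam_def l_def G_def by blast
qed

lemma caseA:
  fixes phi :: "'a::finite \<Rightarrow> 'a list" and w :: "nat \<Rightarrow> 'a"
  assumes k: "0 < k" and ne: "non_erasing phi" and fp: "fixpt (morph_ext phi) w"
    and freq: "\<And>a. (\<lambda>M. cnt w a M / real M) \<longlonglongrightarrow> f a"
    and a0: "f a0 > 0" and gr: "\<And>B. \<exists>n. real (length ((morph_ext phi ^^ n) [a0])) > B"
  shows "convergent (\<lambda>N. real (count_list (pre (Wk k w) N) v) / real N)"
proof -
  define R where "R N = real (count_list (pre (Wk k w) N) v) / real N" for N
  have fnn: "f a \<ge> 0" for a
    by (rule LIMSEQ_le_const[OF freq]) (auto simp: cnt_def)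
  define S where "S = (\<Sum>a\<in>UNIV. f a)"
  have S0: "S \<ge> 0" unfolding S_def by (intro sum_nonneg fnn)
  have "Cauchy R"
  proof (rule CauchyI)
    fix e :: real assume e: "e > 0"
    define e' where "e' = e / 3"
    have e': "e' > 0" using e by (simp add: e'_def)
    obtain n where n: "real (length ((morph_ext phi ^^ n) [a0])) > real k * S / (e' * f a0)"
      using gr by blast
    define lam where "lam = (\<Sum>a\<in>UNIV. real (length ((morph_ext phi ^^ n) [a])) * f a)"
    have "lam \<ge> real (length ((morph_ext phi ^^ n) [a0])) * f a0"
      unfolding lam_def by (rule member_le_sum) (auto intro: mult_nonneg_nonneg fnn)
    moreover have "real (length ((morph_ext phi ^^ n) [a0])) * f a0 > real k * S / e'"
      using n a0 e' by (simp add: field_simps)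
    ultimately have lamb: "lam > real k * S / e'" by simp
    have lpos: "lam > 0" using lamb k S0 e' by (smt (verit) divide_nonneg_pos of_nat_0_le_iff mult_nonneg_nonneg)
    have small: "real k * S / lam < e'"
    proof -
      have "real k * S < e' * lam" using lamb e' by (simp add: field_simps)
      thus ?thesis using lpos by (simp add: field_simps)
    qed
    from caseA_level[OF k ne fp freq _ e', of n v] lpos
    obtain \<alpha> \<beta> N0 where ab: "\<beta> - \<alpha> = real k * S / lam"
      and N0: "\<forall>N\<ge>N0. \<alpha> - e' \<le> R N \<and> R N \<le> \<beta> + e'"
      unfolding lam_def S_def R_def by blast
    show "\<exists>M. \<forall>m\<ge>M. \<forall>n\<ge>M. norm (R m - R n) < e"
    proof (intro exI allI impI)
      fix m n' assume "m \<ge> N0" "n' \<ge> N0"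
      hence "\<alpha> - e' \<le> R m" "R m \<le> \<beta> + e'" "\<alpha> - e' \<le> R n'" "R n' \<le> \<beta> + e'" using N0 by auto
      hence "\<bar>R m - R n'\<bar> \<le> (\<beta> - \<alpha>) + 2 * e'" by linarith
      also have "\<dots> < 3 * e'" using small ab by simp
      finally show "norm (R m - R n') < e" by (simp add: e'_def)
    qed
  qed
  thus ?thesis unfolding R_def by (simp add: Cauchy_convergent_iff)
qed

lemma orbit_fact:
  fixes f :: "'b \<Rightarrow> 'b"
  assumes fin: "finite (range (\<lambda>n. (f ^^ n) s))"
  shows "\<exists>N0. \<forall>N\<ge>N0. (f ^^ (fact N + fact N)) s = (f ^^ fact N) s"
proof -
  have "\<not> inj (\<lambda>n. (f ^^ n) s)" using fin by (metis finite_imageD infinite_UNIV_nat)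
  then obtain i j where ij: "i \<noteq> j" "(f ^^ i) s = (f ^^ j) s" unfolding inj_def by blast
  then obtain i j where ij: "i < j" "(f ^^ i) s = (f ^^ j) s" by (metis linorder_neqE_nat)
  define p where "p = j - i"
  have p: "p > 0" using ij by (simp add: p_def)
  have per: "(f ^^ (n + p)) s = (f ^^ n) s" if "n \<ge> i" for n
  proof -
    have e1: "n + p = (n - i) + j" using that ij by (simp add: p_def)
    have e2: "n = (n - i) + i" using that by simp
    have "(f ^^ (n + p)) s = (f ^^ (n - i)) ((f ^^ j) s)" unfolding e1 funpow_add by simp
    also have "\<dots> = (f ^^ (n - i)) ((f ^^ i) s)" using ij by simp
    also have "\<dots> = (f ^^ ((n - i) + i)) s" unfolding funpow_add by simp
    finally show ?thesis using e2 by simp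
  qed
  have perm: "(f ^^ (n + t * p)) s = (f ^^ n) s" if "n \<ge> i" for n t
  proof (induction t)
    case (Suc t)
    have "(f ^^ (n + Suc t * p)) s = (f ^^ ((n + t * p) + p)) s" by (simp add: algebra_simps)
    also have "\<dots> = (f ^^ (n + t * p)) s" by (rule per) (use that in simp)
    finally show ?case using Suc by simp
  qed simp
  show ?thesis
  proof (intro exI allI impI)
    fix N assume N: "N \<ge> max i p"
    have "p dvd fact N" using p N by (intro dvd_fact) auto
    then obtain t where t: "fact N = t * p" by (metis dvd_def mult.commute)
    have "fact N \<ge> N" by (rule fact_ge_self)
    hence "fact N \<ge> i" using N by simp
    thus "(f ^^ (fact N + fact N)) s = (f ^^ fact N) s" using perm[of "fact N" t] t by simp
  qed
qed

lemma finite_choice_nat: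
  fixes P :: "'b \<Rightarrow> nat \<Rightarrow> bool"
  assumes "finite S" "\<forall>s\<in>S. \<exists>N0. \<forall>N\<ge>N0. P s N"
  shows "\<exists>N0. \<forall>N\<ge>N0. \<forall>s\<in>S. P s N"
proof -
  from assms(2) obtain h where h: "\<forall>s\<in>S. \<forall>N\<ge>h s. P s N" by metis
  define N0 where "N0 = Max (h ` S \<union> {0})"
  have "\<forall>s\<in>S. h s \<le> N0" unfolding N0_def using assms(1) by (auto intro: Max_ge)
  thus ?thesis using h by (metis le_trans)
qed

definition Gs :: "('b list \<Rightarrow> 'b list) \<Rightarrow> 'b set \<Rightarrow> 'b set" where
  "Gs F T = (\<Union>z\<in>T. set (F [z]))"

lemma Gs_mono: "A \<subseteq> B \<Longrightarrow> Gs F A \<subseteq> Gs F B" by (auto simp: Gs_def)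

lemma Gs_pow_mono: "A \<subseteq> B \<Longrightarrow> (Gs F ^^ n) A \<subseteq> (Gs F ^^ n) B"
  by (induction n) (auto simp: Gs_def)

lemma set_pow: assumes "hom F" shows "set ((F ^^ n) xs) = (Gs F ^^ n) (set xs)"
proof (induction n arbitrary: xs)
  case 0 then show ?case by simp
next
  case (Suc n)
  have "set (F xs) = Gs F (set xs)" using hom_concat[OF assms, of xs] by (simp add: Gs_def)
  then show ?case using Suc by (simp add: pow_Suc_apply funpow_Suc_right del: funpow.simps)
qed


lemma recur_m:
  assumes e: "(Gs F ^^ (m + m)) {y} = (Gs F ^^ m) {y}" and y: "y \<in> (Gs F ^^ n) {y}" and m: "m \<ge> 1" and n: "n \<ge> 1"
  shows "y \<in> (Gs F ^^ m) {y}"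
proof -
  have a: "y \<in> (Gs F ^^ (n * j)) {y}" for j
  proof (induction j)
    case 0 then show ?case by simp
  next
    case (Suc j)
    have "{y} \<subseteq> (Gs F ^^ n) {y}" using y by simp
    hence "(Gs F ^^ (n * j)) {y} \<subseteq> (Gs F ^^ (n * j)) ((Gs F ^^ n) {y})" by (rule Gs_pow_mono)
    also have "\<dots> = (Gs F ^^ (n * j + n)) {y}" by (simp add: funpow_add)
    also have "n * j + n = n * Suc j" by simp
    finally show ?case using Suc by blast
  qed
  have b: "(Gs F ^^ (Suc j * m)) {y} = (Gs F ^^ m) {y}" for j
  proof (induction j)
    case 0 then show ?case by simp
  next
    case (Suc j)
    have "Suc (Suc j) * m = m + Suc j * m" by simp
    hence "(Gs F ^^ (Suc (Suc j) * m)) {y} = (Gs F ^^ m) ((Gs F ^^ (Suc j * m)) {y})"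
      by (simp only: funpow_add comp_apply)
    also have "\<dots> = (Gs F ^^ m) ((Gs F ^^ m) {y})" using Suc by simp
    also have "\<dots> = (Gs F ^^ (m + m)) {y}" by (simp add: funpow_add)
    finally show ?case using e by simp
  qed
  have "y \<in> (Gs F ^^ (n * m)) {y}" by (rule a)
  moreover have "n * m = Suc (n - 1) * m" using n by simp
  ultimately show ?thesis using b[of "n - 1"] by simp
qed

lemma Kmor_len:
  assumes k: "0 < k" and ne: "non_erasing phi" and lz: "length z = k" and x: "x \<in> set (Kmor k phi z)"
  shows "length x = k"
proof -
  have z: "z = hd z # tl z" using lz k by (cases z) auto
  have "length (morph_ext phi (tl z)) \<ge> k - 1" using morph_ext_len[OF ne, of "tl z"] lz by simp
  hence L: "length (morph_ext phi z) \<ge> length (phi (hd z)) + (k - 1)"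
    by (subst z) (simp add: morph_ext_Cons)
  from x obtain j where j: "j < length (phi (hd z))" and xj: "x = take k (drop j (morph_ext phi z))"
    using lz by (auto simp: Kmor_def kb_def)
  show ?thesis using L j k xj by simp
qed

lemma closed_pow:
  assumes h: "hom F" and cl: "\<forall>z\<in>S. set (F [z]) \<subseteq> S" and xs: "set xs \<subseteq> S"
  shows "set ((F ^^ n) xs) \<subseteq> S"
proof -
  have "(Gs F ^^ n) T \<subseteq> S" if "T \<subseteq> S" for T
    using that by (induction n) (use cl in \<open>auto simp: Gs_def\<close>)
  thus ?thesis using set_pow[OF h] xs by simp
qed

lemma choose_m:
  fixes phi :: "'a::finite \<Rightarrow> 'a list"
  assumes k: "0 < k" and ne: "non_erasing phi"
  shows "\<exists>m\<ge>1. (\<forall>a. (\<exists>B. \<forall>n. length ((morph_ext phi ^^ n) [a]) \<le> B) \<longrightarrow> (morph_ext phi ^^ (m + m)) [a] = (morph_ext phi ^^ m) [a])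
     \<and> (\<forall>y. length y = k \<longrightarrow> (\<exists>n\<ge>1. y \<in> set ((morph_ext (Kmor k phi) ^^ n) [y])) \<longrightarrow> y \<in> set ((morph_ext (Kmor k phi) ^^ m) [y]))"
proof -
  define K where "K = morph_ext (Kmor k phi)"
  define S1 where "S1 = {a. \<exists>B. \<forall>n. length ((morph_ext phi ^^ n) [a]) \<le> B}"
  define S2 where "S2 = {y :: 'a list. set y \<subseteq> UNIV \<and> length y = k}"
  have f2: "finite S2" unfolding S2_def by (rule finite_lists_length_eq) simp
  have A1: "\<forall>a\<in>S1. \<exists>N0. \<forall>N\<ge>N0. (morph_ext phi ^^ (fact N + fact N)) [a] = (morph_ext phi ^^ fact N) [a]"
  proof
    fix a assume "a \<in> S1"
    then obtain B where B: "\<forall>n. length ((morph_ext phi ^^ n) [a]) \<le> B" by (auto simp: S1_def)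
    have "range (\<lambda>n. (morph_ext phi ^^ n) [a]) \<subseteq> {xs. set xs \<subseteq> UNIV \<and> length xs \<le> B}" using B by auto
    hence "finite (range (\<lambda>n. (morph_ext phi ^^ n) [a]))"
      by (rule finite_subset) (rule finite_lists_length_le, simp)
    thus "\<exists>N0. \<forall>N\<ge>N0. (morph_ext phi ^^ (fact N + fact N)) [a] = (morph_ext phi ^^ fact N) [a]"
      by (rule orbit_fact)
  qed
  obtain N1 where N1: "\<forall>N\<ge>N1. \<forall>a\<in>S1. (morph_ext phi ^^ (fact N + fact N)) [a] = (morph_ext phi ^^ fact N) [a]"
    using finite_choice_nat[OF _ A1] by auto
  have sK: "set ((K ^^ n) xs) = (Gs K ^^ n) (set xs)" for n xs unfolding K_def by (rule set_pow[OF morph_ext_hom])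
  have clK: "\<forall>z\<in>S2. set (K [z]) \<subseteq> S2"
    using Kmor_len[OF k ne] by (auto simp: S2_def K_def morph_ext_def)
  have A2: "\<forall>y\<in>S2. \<exists>N0. \<forall>N\<ge>N0. (Gs K ^^ (fact N + fact N)) {y} = (Gs K ^^ fact N) {y}"
  proof
    fix y assume y: "y \<in> S2"
    have "range (\<lambda>n. (Gs K ^^ n) {y}) \<subseteq> Pow S2"
    proof
      fix T assume "T \<in> range (\<lambda>n. (Gs K ^^ n) {y})"
      then obtain n where "T = (Gs K ^^ n) {y}" by blast
      hence "T = set ((K ^^ n) [y])" using sK[of n "[y]"] by simp
      thus "T \<in> Pow S2" using closed_pow[OF morph_ext_hom clK[unfolded K_def], of "[y]" n] y by (simp add: K_def)
    qed
    hence "finite (range (\<lambda>n. (Gs K ^^ n) {y}))" using f2 by (meson finite_Pow_iff finite_subset)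
    thus "\<exists>N0. \<forall>N\<ge>N0. (Gs K ^^ (fact N + fact N)) {y} = (Gs K ^^ fact N) {y}" by (rule orbit_fact)
  qed
  obtain N2 where N2: "\<forall>N\<ge>N2. \<forall>y\<in>S2. (Gs K ^^ (fact N + fact N)) {y} = (Gs K ^^ fact N) {y}"
    using finite_choice_nat[OF f2 A2] by auto
  define m :: nat where "m = fact (max N1 N2)"
  have m1: "m \<ge> 1" by (simp add: m_def)
  have P1: "\<forall>a\<in>S1. (morph_ext phi ^^ (m + m)) [a] = (morph_ext phi ^^ m) [a]" using N1 by (simp add: m_def)
  have P2: "\<forall>y\<in>S2. (Gs K ^^ (m + m)) {y} = (Gs K ^^ m) {y}" using N2 by (simp add: m_def)
  show ?thesis
  proof (intro exI[of _ m] conjI allI impI m1)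
    fix a assume "\<exists>B. \<forall>n. length ((morph_ext phi ^^ n) [a]) \<le> B"
    thus "(morph_ext phi ^^ (m + m)) [a] = (morph_ext phi ^^ m) [a]" using P1 by (simp add: S1_def)
  next
    fix y :: "'a list" assume ly: "length y = k" and "\<exists>n\<ge>1. y \<in> set ((morph_ext (Kmor k phi) ^^ n) [y])"
    then obtain n where n: "n \<ge> 1" "y \<in> (Gs K ^^ n) {y}"
      using sK[of _ "[y]"] by (auto simp: K_def)
    have "y \<in> (Gs K ^^ m) {y}" by (rule recur_m[OF _ n(2) m1 n(1)]) (use P2 ly in \<open>simp add: S2_def\<close>)
    thus "y \<in> set ((morph_ext (Kmor k phi) ^^ m) [y])"
      using sK[of m "[y]"] by (simp add: K_def)
  qed
qed

lemma sum_list_ge_count: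
  fixes g :: "'b \<Rightarrow> nat"
  shows "count_list xs c * g c \<le> (\<Sum>z\<leftarrow>xs. g z)"
proof (induction xs)
  case (Cons x xs)
  show ?case
  proof (cases "x = c")
    case True
    then have "count_list (x # xs) c * g c = g x + count_list xs c * g c" by simp
    then show ?thesis using Cons by simp
  next
    case False
    then show ?thesis using Cons by simp
  qed
qed simp

lemma sum_if_len: "(\<Sum>i<N. if P i then (c::nat) else 0) = c * length (filter P [0..<N])"
  by (induction N) auto
lemma sum_if_card: "(\<Sum>i<(N::nat). if P i then (c::nat) else 0) = c * card {i. i < N \<and> P i}"
proof -
  have "length (filter P [0..<N]) = card {i. i < N \<and> P i}"
    unfolding length_filter_conv_card by (rule arg_cong[where f=card]) auto
  thus ?thesis using sum_if_len by simp
qed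

lemma no_double:
  fixes F :: "'b list \<Rightarrow> 'b list" and X :: "nat \<Rightarrow> 'b"
  assumes hF: "hom F" and nF: "ne F" and fp: "fixpt F X"
    and dens: "(\<lambda>N. real (card {i. i < N \<and> F [X i] \<noteq> [X i]}) / real N) \<longlonglongrightarrow> 0"
    and Kb: "\<And>i. length (F [X i]) \<le> Kc"
    and c2: "count_list (F [X j]) (X j) \<ge> 2"
  shows False
proof -
  define c where "c = X j"
  define nf where "nf N = card {i. i < N \<and> F [X i] \<noteq> [X i]}" for N
  define P where "P n = (F ^^ n) (pre X (Suc j))" for n
  define L where "L n = length (P n)" for n
  have hp: "hom (F ^^ n)" for n by (rule hom_pow[OF hF])
  have cntc: "count_list ((F ^^ n) [c]) c \<ge> 2 ^ n" for n
  proof (induction n)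
    case 0 then show ?case by simp
  next
    case (Suc n)
    have "count_list ((F ^^ Suc n) [c]) c = (\<Sum>z\<leftarrow>F [c]. count_list ((F ^^ n) [z]) c)"
      unfolding pow_Suc_apply by (rule hom_count[OF hp])
    also have "\<dots> \<ge> count_list (F [c]) c * count_list ((F ^^ n) [c]) c"
      by (rule sum_list_ge_count)
    moreover have "count_list (F [c]) c * count_list ((F ^^ n) [c]) c \<ge> 2 * 2 ^ n"
      using c2 Suc unfolding c_def by (intro mult_le_mono) auto
    ultimately have "count_list ((F ^^ Suc n) [c]) c \<ge> 2 * 2 ^ n" by linarith
    thus ?case by simp
  qed
  have Lge: "L n \<ge> 2 ^ n" for n
  proof -
    have "P n = (F ^^ n) (pre X j) @ (F ^^ n) [c]" unfolding P_def c_def pre_Suc by (rule hom_app[OF hp])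
    hence "L n \<ge> length ((F ^^ n) [c])" by (simp add: L_def)
    moreover have "length ((F ^^ n) [c]) \<ge> count_list ((F ^^ n) [c]) c" by (rule count_le_length)
    ultimately show ?thesis using cntc[of n] by simp
  qed
  have PL: "P n = pre X (L n)" for n
    unfolding P_def L_def using fixptD[OF fixpt_pow[OF fp, of n]] by metis
  have Lstep: "L (Suc n) \<le> L n + Kc * nf (L n)" for n
  proof -
    have "L (Suc n) = length (F (P n))" by (simp add: L_def P_def)
    also have "\<dots> = (\<Sum>i<L n. length (F [X i]))"
      unfolding PL hom_length[OF hF, of "pre X (L n)"] by (rule sum_map_pre)
    also have "\<dots> \<le> (\<Sum>i<L n. 1 + (if F [X i] \<noteq> [X i] then Kc else 0))"
    proof (rule sum_mono)
      fix i show "length (F [X i]) \<le> 1 + (if F [X i] \<noteq> [X i] then Kc else 0)" using Kb[of i] by auto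
    qed
    also have "\<dots> = L n + Kc * nf (L n)" unfolding sum.distrib sum_if_card nf_def by simp
    finally show ?thesis .
  qed
  define Kr where "Kr = real Kc + 1"
  have Kr: "Kr > 0" by (simp add: Kr_def)
  from LIMSEQ_D[OF dens, of "1 / (2 * Kr)"] Kr obtain N0 where
    N0: "\<And>N. N \<ge> N0 \<Longrightarrow> \<bar>real (nf N) / real N\<bar> < 1 / (2 * Kr)" by (auto simp: nf_def)
  have grow: "real (L (Suc n)) \<le> 3 / 2 * real (L n)" if "L n \<ge> max N0 1" for n
  proof -
    have Ln: "real (L n) > 0" using that by simp
    have "real (nf (L n)) / real (L n) < 1 / (2 * Kr)" using N0[of "L n"] that by simp
    hence "real (nf (L n)) < real (L n) / (2 * Kr)" using Ln by (simp add: field_simps)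
    hence "real Kc * real (nf (L n)) \<le> real Kc * (real (L n) / (2 * Kr))"
      by (intro mult_left_mono) auto
    also have "\<dots> \<le> real (L n) / 2" using Ln Kr by (simp add: Kr_def field_simps)
    finally have "real Kc * real (nf (L n)) \<le> real (L n) / 2" .
    moreover have "real (L (Suc n)) \<le> real (L n) + real Kc * real (nf (L n))"
      using Lstep[of n] by (simp only: of_nat_add[symmetric] of_nat_mult[symmetric] of_nat_le_iff)
    ultimately show ?thesis by simp
  qed
  define n0 where "n0 = max N0 1"
  have Ln0: "L (n0 + t) \<ge> max N0 1" for t
  proof -
    have "n0 + t < 2 ^ (n0 + t)" by (rule less_exp)
    hence "n0 \<le> L (n0 + t)" using Lge[of "n0 + t"] by linarith
    thus ?thesis by (simp add: n0_def)
  qed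
  have bnd: "real (L (n0 + t)) \<le> (3 / 2) ^ t * real (L n0)" for t
  proof (induction t)
    case 0 then show ?case by simp
  next
    case (Suc t)
    have "real (L (n0 + Suc t)) \<le> 3 / 2 * real (L (n0 + t))" using grow[OF Ln0[of t]] by simp
    also have "\<dots> \<le> 3 / 2 * ((3 / 2) ^ t * real (L n0))" using Suc by simp
    finally show ?case by simp
  qed
  obtain t where t: "real (L n0) < (4 / 3) ^ t" using real_arch_pow[of "4/3" "real (L n0)"] by auto
  have "(2::real) ^ t \<le> 2 ^ (n0 + t)" by (rule power_increasing) auto
  also have "\<dots> \<le> real (L (n0 + t))"
  proof -
    have "real (2 ^ (n0 + t)) \<le> real (L (n0 + t))" using Lge[of "n0 + t"] by (simp only: of_nat_le_iff)
    thus ?thesis by simp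
  qed
  also have "\<dots> \<le> (3 / 2) ^ t * real (L n0)" by (rule bnd)
  also have "\<dots> < (3 / 2) ^ t * (4 / 3) ^ t" using t by simp
  also have "\<dots> = 2 ^ t" by (simp add: power_mult_distrib[symmetric])
  finally show False by simp
qed

lemma hom_fix_letters:
  assumes hF: "hom F" and nF: "ne F" and e: "F xs = xs" and z: "z \<in> set xs"
  shows "F [z] = [z]"
  using e z
proof (induction xs)
  case Nil then show ?case by simp
next
  case (Cons x xs)
  have e2: "F [x] @ F xs = x # xs" using Cons.prems(1) hom_Cons[OF hF, of x xs] by simp
  have l1: "length (F [x]) \<ge> 1" using nF by (cases "F [x]") (auto simp: ne_def)
  have l2: "length (F xs) \<ge> length xs" by (rule ne_length[OF hF nF])
  have "length (F [x]) + length (F xs) = Suc (length xs)" using arg_cong[OF e2, of length] by simp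
  hence "length (F [x]) = 1" using l1 l2 by linarith
  then obtain a where a: "F [x] = [a]" by (cases "F [x]") auto
  hence "a = x" "F xs = xs" using e2 by auto
  then show ?case using Cons a by auto
qed

lemma card_filter_pre: "card {i. i < N \<and> Q (X i)} = length (filter Q (pre X N))"
  unfolding length_filter_conv_card by (rule arg_cong[where f=card]) auto

lemma dens_w:
  fixes phi :: "'a::finite \<Rightarrow> 'a list" and w :: "nat \<Rightarrow> 'a"
  assumes ne: "non_erasing phi" and fp: "fixpt (morph_ext phi) w"
    and freq: "\<And>a. (\<lambda>M. cnt w a M / real M) \<longlonglongrightarrow> f a"
    and caseB: "\<And>a. f a > 0 \<Longrightarrow> \<exists>B. \<forall>n. length ((morph_ext phi ^^ n) [a]) \<le> B"
    and idem: "\<And>a. (\<exists>B. \<forall>n. length ((morph_ext phi ^^ n) [a]) \<le> B) \<Longrightarrow> (morph_ext phi ^^ (m + m)) [a] = (morph_ext phi ^^ m) [a]"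
  shows "(\<lambda>N. real (card {i. i < N \<and> (morph_ext phi ^^ m) [w i] \<noteq> [w i]}) / real N) \<longlonglongrightarrow> 0"
proof -
  define psi where "psi = morph_ext phi ^^ m"
  define bd where "bd a \<longleftrightarrow> (\<exists>B. \<forall>n. length ((morph_ext phi ^^ n) [a]) \<le> B)" for a
  define Q where "Q z \<longleftrightarrow> psi [z] \<noteq> [z]" for z
  define h where "h a = (if bd a then 0 else real (length (psi [a])))" for a
  have hP: "hom psi" unfolding psi_def by (rule hom_pow[OF morph_ext_hom])
  have nP: "ne psi" unfolding psi_def by (rule ne_pow[OF morph_ext_hom ne_morph_ext[OF ne]])
  have fpP: "fixpt psi w" unfolding psi_def by (rule fixpt_pow[OF fp])
  have fixl: "\<not> Q z" if "bd a" "z \<in> set (psi [a])" for a z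
  proof -
    have "psi (psi [a]) = psi [a]" using idem[of a] that(1) unfolding psi_def bd_def
      by (simp add: funpow_add)
    thus ?thesis unfolding Q_def using hom_fix_letters[OF hP nP _ that(2)] by blast
  qed
  have fnn: "f a \<ge> 0" for a by (rule LIMSEQ_le_const[OF freq]) (auto simp: cnt_def)
  have hf: "h a * f a = 0" for a
  proof (cases "bd a")
    case False
    hence "\<not> f a > 0" using caseB unfolding bd_def by blast
    hence "f a = 0" using fnn[of a] by simp
    thus ?thesis by simp
  qed (simp add: h_def)
  define nf where "nf N = card {i. i < N \<and> Q (w i)}" for N
  have nf_mono: "nf N \<le> nf N'" if "N \<le> N'" for N N'
    unfolding nf_def by (rule card_mono) (use that in auto)
  have bound: "real (nf N) \<le> (\<Sum>a\<in>UNIV. h a * cnt w a N)" for N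
  proof -
    define L where "L = length (psi (pre w N))"
    have NL: "N \<le> L" unfolding L_def using ne_length[OF hP nP, of "pre w N"] by simp
    have "real (nf N) \<le> real (nf L)" using nf_mono[OF NL] by simp
    also have "nf L = length (filter Q (psi (pre w N)))"
      unfolding nf_def card_filter_pre L_def using fixptD[OF fpP, of N] by simp
    also have "\<dots> = (\<Sum>j<N. length (filter Q (psi [w j])))"
      unfolding hom_concat[OF hP, of "pre w N"] filter_concat length_concat map_map comp_def
      by (rule sum_map_pre)
    also have "real \<dots> \<le> (\<Sum>j<N. h (w j))" unfolding of_nat_sum
    proof (rule sum_mono)
      fix j
      show "real (length (filter Q (psi [w j]))) \<le> h (w j)"
      proof (cases "bd (w j)")
        case True
        hence "filter Q (psi [w j]) = []" using fixl by (auto simp: filter_empty_conv)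
        thus ?thesis using True by (simp add: h_def)
      next
        case False thus ?thesis by (simp add: h_def)
      qed
    qed
    also have "\<dots> = (\<Sum>a\<in>UNIV. h a * cnt w a N)" by (rule sum_by_letter)
    finally show ?thesis .
  qed
  have lim0: "(\<lambda>N. (\<Sum>a\<in>UNIV. h a * cnt w a N) / real N) \<longlonglongrightarrow> 0"
    using lim_by_letter(1)[OF freq, of h] hf by simp
  have "(\<lambda>N. real (nf N) / real N) \<longlonglongrightarrow> 0"
  proof (rule real_tendsto_sandwich[OF _ _ tendsto_const lim0])
    show "eventually (\<lambda>N. 0 \<le> real (nf N) / real N) sequentially" by simp
    show "eventually (\<lambda>N. real (nf N) / real N \<le> (\<Sum>a\<in>UNIV. h a * cnt w a N) / real N) sequentially"
      using bound by (intro always_eventually allI divide_right_mono) auto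
  qed
  thus ?thesis unfolding nf_def Q_def psi_def .
qed

lemma dens_shift:
  fixes Q R :: "nat \<Rightarrow> bool"
  assumes d: "(\<lambda>N. real (card {i. i < N \<and> Q i}) / real N) \<longlonglongrightarrow> 0"
    and RQ: "\<And>i. R i \<Longrightarrow> \<exists>t<k. Q (i + t)"
  shows "(\<lambda>N. real (card {i. i < N \<and> R i}) / real N) \<longlonglongrightarrow> 0"
proof -
  have cb: "card {i. i < N \<and> R i} \<le> k * card {i. i < N + k \<and> Q i}" for N
  proof -
    have "{i. i < N \<and> R i} \<subseteq> (\<Union>t<k. {i. i < N \<and> Q (i + t)})" using RQ by blast
    hence "card {i. i < N \<and> R i} \<le> card (\<Union>t<k. {i. i < N \<and> Q (i + t)})"
      by (intro card_mono) auto
    also have "\<dots> \<le> (\<Sum>t<k. card {i. i < N \<and> Q (i + t)})" by (rule card_UN_le) simp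
    also have "\<dots> \<le> (\<Sum>t<k. card {i. i < N + k \<and> Q i})"
    proof (rule sum_mono)
      fix t assume t: "t \<in> {..<k}"
      have "card {i. i < N \<and> Q (i + t)} = card ((\<lambda>i. i + t) ` {i. i < N \<and> Q (i + t)})"
        by (rule card_image[symmetric]) (simp add: inj_on_def)
      also have "\<dots> \<le> card {i. i < N + k \<and> Q i}"
        by (rule card_mono) (use t in auto)
      finally show "card {i. i < N \<and> Q (i + t)} \<le> card {i. i < N + k \<and> Q i}" .
    qed
    finally show ?thesis by simp
  qed
  have d2: "(\<lambda>N. real k * (real (card {i. i < N + k \<and> Q i}) / real (N + k)) * (real (N + k) / real N)) \<longlonglongrightarrow> real k * 0 * 1"
  proof (intro tendsto_mult tendsto_const)
    show "(\<lambda>N. real (card {i. i < N + k \<and> Q i}) / real (N + k)) \<longlonglongrightarrow> 0"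
      using LIMSEQ_ignore_initial_segment[OF d, of k] by simp
    have "(\<lambda>N. 1 + real k / real N) \<longlonglongrightarrow> 1 + 0"
      by (intro tendsto_add tendsto_const tendsto_divide_0[OF tendsto_const] filterlim_at_top_imp_at_infinity filterlim_real_sequentially)
    moreover have "eventually (\<lambda>N. 1 + real k / real N = real (N + k) / real N) sequentially"
      by (rule eventually_sequentiallyI[of 1]) (simp add: field_simps)
    ultimately show "(\<lambda>N. real (N + k) / real N) \<longlonglongrightarrow> 1" by (auto intro: Lim_transform_eventually)
  qed
  show ?thesis
  proof (rule real_tendsto_sandwich[OF _ _ tendsto_const])
    show "eventually (\<lambda>N. 0 \<le> real (card {i. i < N \<and> R i}) / real N) sequentially" by simp
    show "eventually (\<lambda>N. real (card {i. i < N \<and> R i}) / real N \<le> real k * (real (card {i. i < N + k \<and> Q i}) / real (N + k)) * (real (N + k) / real N)) sequentially"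
    proof (rule eventually_sequentiallyI[of 1])
      fix N :: nat assume N: "N \<ge> 1"
      have "real (card {i. i < N \<and> R i}) \<le> real k * real (card {i. i < N + k \<and> Q i})"
        using cb[of N] by (metis of_nat_le_iff of_nat_mult)
      hence "real (card {i. i < N \<and> R i}) / real N \<le> real k * real (card {i. i < N + k \<and> Q i}) / real N"
        by (intro divide_right_mono) auto
      moreover have "real k * (real (card {i. i < N + k \<and> Q i}) / real (N + k)) * (real (N + k) / real N)
          = real k * real (card {i. i < N + k \<and> Q i}) / real N"
        using N by (simp add: divide_simps)
      ultimately show "real (card {i. i < N \<and> R i}) / real N \<le> real k * (real (card {i. i < N + k \<and> Q i}) / real (N + k)) * (real (N + k) / real N)"
        by simp
    qed
    show "(\<lambda>N. real k * (real (card {i. i < N + k \<and> Q i}) / real (N + k)) * (real (N + k) / real N)) \<longlonglongrightarrow> 0"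
      using d2 by simp
  qed
qed

lemma good_to_conv:
  fixes F :: "'b list \<Rightarrow> 'b list" and X :: "nat \<Rightarrow> 'b"
  assumes hF: "hom F" and nF: "ne F" and fp: "fixpt F X"
    and hd: "F [X 0] = X 0 # rest" and rest: "rest \<noteq> []"
    and g: "good (\<lambda>n. real (length ((F ^^ n) [X 0]))) (\<lambda>n. real (count_list ((F ^^ n) [X 0]) v))"
  shows "convergent (\<lambda>N. real (count_list (pre X N) v) / real N)"
proof -
  define l where "l n = length ((F ^^ n) [X 0])" for n
  define oc where "oc n = count_list ((F ^^ n) [X 0]) v" for n
  from g obtain d C \<rho> where lpos: "\<forall>n. real (l n) > 0" and C: "C > 0" "(\<lambda>n. real (l n) / real n ^ d) \<longlonglongrightarrow> C"
    and r: "(\<lambda>n. real (oc n) / real (l n)) \<longlonglongrightarrow> \<rho>" unfolding good_def l_def oc_def by blast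
  have hp: "hom (F ^^ n)" for n by (rule hom_pow[OF hF])
  have lnz: "l n \<noteq> 0" for n using lpos[rule_format, of n] by simp
  have nep: "ne (F ^^ n)" for n by (rule ne_pow[OF hF nF])
  have lS: "l (Suc n) \<ge> l n + 1" for n
  proof -
    have "(F ^^ Suc n) [X 0] = (F ^^ n) [X 0] @ (F ^^ n) rest"
      unfolding pow_Suc_apply hd by (rule hom_Cons[OF hp])
    moreover have "length ((F ^^ n) rest) \<ge> 1"
      using ne_length[OF hp[of n] nep[of n], of rest] rest by (cases rest) auto
    ultimately show ?thesis by (simp add: l_def)
  qed
  have lmono: "mono l"
  proof (rule monoI)
    fix x y :: nat assume "x \<le> y"
    then show "l x \<le> l y"
    proof (induction y rule: dec_induct)
      case (step n) then show ?case using lS[of n] by linarith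
    qed simp
  qed
  have lge: "l n \<ge> n" for n by (induction n) (use lS in \<open>auto intro: le_trans\<close>)
  have pre1: "pre X 1 = [X 0]" by (simp add: pre_def)
  have key: "count_list (pre X (l n)) v = oc n" for n
  proof -
    have "(F ^^ n) (pre X 1) = pre X (length ((F ^^ n) (pre X 1)))" by (rule fixptD[OF fixpt_pow[OF fp]])
    thus ?thesis unfolding l_def oc_def pre1 by simp
  qed
  have ratio: "(\<lambda>n. real (l (Suc n)) / real (l n)) \<longlonglongrightarrow> 1"
  proof -
    have "(\<lambda>n. (real (l (Suc n)) / real (Suc n) ^ d) / (real (l n) / real n ^ d) * (real (Suc n) / real n) ^ d) \<longlonglongrightarrow> C / C * 1 ^ d"
    proof (intro tendsto_intros LIMSEQ_Suc_n_over_n C(2))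
      show "(\<lambda>n. real (l (Suc n)) / real (Suc n) ^ d) \<longlonglongrightarrow> C" by (rule LIMSEQ_Suc[OF C(2)])
    qed (use C in simp)
    moreover have "eventually (\<lambda>n. (real (l (Suc n)) / real (Suc n) ^ d) / (real (l n) / real n ^ d) * (real (Suc n) / real n) ^ d
        = real (l (Suc n)) / real (l n)) sequentially"
    proof (rule eventually_sequentiallyI[of 1])
      fix n :: nat assume n: "n \<ge> 1"
      have "real (l n) > 0" using lpos by simp
      thus "(real (l (Suc n)) / real (Suc n) ^ d) / (real (l n) / real n ^ d) * (real (Suc n) / real n) ^ d
        = real (l (Suc n)) / real (l n)" using n by (simp add: power_divide field_simps)
    qed
    ultimately show ?thesis using C by (auto intro: Lim_transform_eventually)
  qed
  have limlo: "(\<lambda>n. real (oc n) / real (l (Suc n))) \<longlonglongrightarrow> \<rho>"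
  proof -
    have "(\<lambda>n. (real (oc n) / real (l n)) / (real (l (Suc n)) / real (l n))) \<longlonglongrightarrow> \<rho> / 1"
      by (intro tendsto_divide r ratio) simp
    moreover have "(\<lambda>n. (real (oc n) / real (l n)) / (real (l (Suc n)) / real (l n))) = (\<lambda>n. real (oc n) / real (l (Suc n)))"
      using lnz by (simp add: divide_simps)
    ultimately show ?thesis by simp
  qed
  have limhi: "(\<lambda>n. real (oc (Suc n)) / real (l n)) \<longlonglongrightarrow> \<rho>"
  proof -
    have "(\<lambda>n. (real (oc (Suc n)) / real (l (Suc n))) * (real (l (Suc n)) / real (l n))) \<longlonglongrightarrow> \<rho> * 1"
      by (intro tendsto_mult LIMSEQ_Suc[OF r] ratio)
    moreover have "(\<lambda>n. (real (oc (Suc n)) / real (l (Suc n))) * (real (l (Suc n)) / real (l n))) = (\<lambda>n. real (oc (Suc n)) / real (l n))"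
      using lnz by (simp add: divide_simps)
    ultimately show ?thesis by simp
  qed
  have conv: "(\<lambda>N. real (count_list (pre X N) v) / real N) \<longlonglongrightarrow> \<rho>"
  proof (rule LIMSEQ_I)
    fix e :: real assume e: "e > 0"
    have "\<exists>N0. \<forall>N\<ge>N0. \<rho> - e/2 \<le> real (count_list (pre X N) v) / real N \<and> real (count_list (pre X N) v) / real N \<le> \<rho> + e/2"
    proof (rule sandwich[where L=l and lo="\<lambda>n. real (oc n)" and hi="\<lambda>n. real (oc n)"])
      show "mono (\<lambda>N. count_list (pre X N) v)" by (rule count_pre_mono)
      show "mono l" by (rule lmono)
      show "\<exists>M. l M > B" for B using lge[of "Suc B"] by (intro exI[of _ "Suc B"]) simp
      show "l (Suc M) > 0" for M using lpos by simp
    qed (use key limlo limhi e in auto)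
    then obtain N0 where N0: "\<forall>N\<ge>N0. \<rho> - e/2 \<le> real (count_list (pre X N) v) / real N \<and> real (count_list (pre X N) v) / real N \<le> \<rho> + e/2" by blast
    show "\<exists>no. \<forall>N\<ge>no. norm (real (count_list (pre X N) v) / real N - \<rho>) < e"
    proof (intro exI allI impI)
      fix N assume "N \<ge> N0"
      then have "\<rho> - e/2 \<le> real (count_list (pre X N) v) / real N" "real (count_list (pre X N) v) / real N \<le> \<rho> + e/2"
        using N0 by auto
      thus "norm (real (count_list (pre X N) v) / real N - \<rho>) < e" using e by (simp add: abs_if)
    qed
  qed
  thus ?thesis by (auto simp: convergent_def)
qed

lemma set_hom_sub: "hom G \<Longrightarrow> z \<in> set xs \<Longrightarrow> set (G [z]) \<subseteq> set (G xs)"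
  by (subst hom_concat[of G xs]) auto

lemma setcomp:
  assumes hF: "hom F" and z: "z \<in> set ((F ^^ a) [y])" and x: "x \<in> set ((F ^^ b) [z])"
  shows "x \<in> set ((F ^^ (b + a)) [y])"
proof -
  have "(F ^^ (b + a)) [y] = (F ^^ b) ((F ^^ a) [y])" by (simp add: funpow_add)
  moreover have "set ((F ^^ b) [z]) \<subseteq> set ((F ^^ b) ((F ^^ a) [y]))"
    by (rule set_hom_sub[OF hom_pow[OF hF] z])
  ultimately show ?thesis using x by auto
qed

lemma structure_from_nd:
  fixes F :: "'b list \<Rightarrow> 'b list"
  assumes hF: "hom F" and nF: "ne F" and fin: "finite S"
    and clos: "\<forall>y\<in>S. set (F [y]) \<subseteq> S"
    and nd: "\<forall>c\<in>S. \<forall>p\<ge>1. count_list ((F ^^ p) [c]) c \<le> 1"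
    and rc: "\<forall>y\<in>S. (\<exists>n\<ge>1. y \<in> set ((F ^^ n) [y])) \<longrightarrow> y \<in> set (F [y])"
  shows "\<exists>r. wf r \<and> (\<forall>y\<in>S. (\<forall>z\<in>set (F [y]). (z, y) \<in> r) \<or>
                 (\<exists>\<alpha> \<beta>. F [y] = \<alpha> @ y # \<beta> \<and> (\<forall>z\<in>set (\<alpha> @ \<beta>). (z, y) \<in> r)))"
proof -
  define R where "R y = {z. \<exists>n\<ge>1. z \<in> set ((F ^^ n) [y])}" for y
  have Rtrans: "x \<in> R y" if "z \<in> R y" "x \<in> R z" for x y z
  proof -
    from that obtain a b where "a \<ge> 1" "z \<in> set ((F ^^ a) [y])" "b \<ge> 1" "x \<in> set ((F ^^ b) [z])"
      by (auto simp: R_def)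
    thus ?thesis using setcomp[OF hF] by (auto simp: R_def intro!: exI[of _ "b + a"])
  qed
  have R1: "z \<in> set (F [y]) \<Longrightarrow> z \<in> R y" for y z by (auto simp: R_def intro!: exI[of _ 1])
  define r where "r = {(z, y). z \<in> S \<and> y \<in> S \<and> z \<in> R y \<and> y \<notin> R z}"
  have tr: "trans r" unfolding trans_def r_def using Rtrans by blast
  have ac: "acyclic r" unfolding acyclic_def using trancl_id[OF tr] by (auto simp: r_def)
  have fr: "finite r" by (rule finite_subset[of r "S \<times> S"]) (use fin in \<open>auto simp: r_def\<close>)
  have wfr: "wf r" by (rule finite_acyclic_wf[OF fr ac])
  have str: "(\<forall>z\<in>set (F [y]). (z, y) \<in> r) \<or>
                 (\<exists>\<alpha> \<beta>. F [y] = \<alpha> @ y # \<beta> \<and> (\<forall>z\<in>set (\<alpha> @ \<beta>). (z, y) \<in> r))" if yS: "y \<in> S" for y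
  proof (cases "y \<in> R y")
    case True
    then obtain n where "n \<ge> 1" "y \<in> set ((F ^^ n) [y])" by (auto simp: R_def)
    hence yF: "y \<in> set (F [y])" using rc yS by blast
    then obtain \<alpha> \<beta> where ab: "F [y] = \<alpha> @ y # \<beta>" by (metis split_list)
    have yy: "y \<in> set ((F ^^ n) [y])" for n
    proof (induction n)
      case (Suc n)
      have "y \<in> set ((F ^^ 1) [y])" using yF by simp
      from setcomp[OF hF Suc this] show ?case by simp
    qed simp
    have "(z, y) \<in> r" if z: "z \<in> set (\<alpha> @ \<beta>)" for z
    proof -
      have zF: "z \<in> set (F [y])" using z ab by auto
      have zS: "z \<in> S" using clos yS zF by blast
      have "y \<notin> R z"
      proof
        assume "y \<in> R z"
        then obtain n where n: "n \<ge> 1" "y \<in> set ((F ^^ n) [z])" by (auto simp: R_def)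
        have hp: "hom (F ^^ n)" by (rule hom_pow[OF hF])
        have e: "(F ^^ Suc n) [y] = (F ^^ n) \<alpha> @ (F ^^ n) [y] @ (F ^^ n) \<beta>"
          unfolding pow_Suc_apply ab using hom_app[OF hp, of \<alpha> "y # \<beta>"] hom_Cons[OF hp, of y \<beta>] by simp
        have "set ((F ^^ n) [z]) \<subseteq> set ((F ^^ n) (\<alpha> @ \<beta>))" by (rule set_hom_sub[OF hp z])
        hence "y \<in> set ((F ^^ n) (\<alpha> @ \<beta>))" using n by blast
        hence c1: "count_list ((F ^^ n) \<alpha>) y + count_list ((F ^^ n) \<beta>) y \<ge> 1"
          using hom_app[OF hp, of \<alpha> \<beta>] count_list_0_iff by fastforce
        have c2: "count_list ((F ^^ n) [y]) y \<ge> 1" using yy[of n] count_list_0_iff by fastforce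
        have "count_list ((F ^^ Suc n) [y]) y \<ge> 2" unfolding e using c1 c2 by simp
        moreover have "count_list ((F ^^ Suc n) [y]) y \<le> 1" proof -
          have "Suc n \<ge> 1" by simp
          thus ?thesis using nd yS by blast
        qed
        ultimately show False by simp
      qed
      thus ?thesis using zS yS R1[OF zF] by (simp add: r_def)
    qed
    thus ?thesis using ab by blast
  next
    case False
    have "(z, y) \<in> r" if zF: "z \<in> set (F [y])" for z
    proof -
      have zS: "z \<in> S" using clos yS zF by blast
      have "y \<notin> R z" using False Rtrans R1[OF zF] by blast
      thus ?thesis using zS yS R1[OF zF] by (simp add: r_def)
    qed
    thus ?thesis by blast
  qed
  show ?thesis using wfr str by blast
qed

lemma pow_b_len:
  assumes ne: "non_erasing phi" and pb: "phi b = b # u" and u: "u \<noteq> []"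
  shows "length ((morph_ext phi ^^ n) [b]) \<ge> Suc n \<and> (\<exists>t. (morph_ext phi ^^ n) [b] = b # t)"
proof (induction n)
  case 0 then show ?case by simp
next
  case (Suc n)
  then obtain t where t: "(morph_ext phi ^^ n) [b] = b # t" by blast
  have e: "(morph_ext phi ^^ Suc n) [b] = b # u @ morph_ext phi t" by (simp add: t morph_ext_Cons pb)
  have "length (morph_ext phi t) \<ge> length t" by (rule morph_ext_len[OF ne])
  hence "length ((morph_ext phi ^^ Suc n) [b]) \<ge> length ((morph_ext phi ^^ n) [b]) + 1"
    using u unfolding e t by (cases u) auto
  then show ?case using Suc e by auto
qed

lemma fix_pow: "F [z] = [z] \<Longrightarrow> (F ^^ p) [z] = [z]"
  by (induction p) auto

lemma caseB:
  fixes phi :: "'a::finite \<Rightarrow> 'a list" and w :: "nat \<Rightarrow> 'a"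
  assumes k: "0 < k" and ne: "non_erasing phi" and fp: "fixpt (morph_ext phi) w"
    and freq: "\<And>a. (\<lambda>M. cnt w a M / real M) \<longlonglongrightarrow> f a"
    and cB: "\<And>a. f a > 0 \<Longrightarrow> \<exists>B. \<forall>n. length ((morph_ext phi ^^ n) [a]) \<le> B"
    and w0: "w 0 = b" and pb: "phi b = b # u" and u: "u \<noteq> []"
  shows "convergent (\<lambda>N. real (count_list (pre (Wk k w) N) v) / real N)"
proof -
  obtain m where m1: "m \<ge> 1"
    and idem: "\<And>a. (\<exists>B. \<forall>n. length ((morph_ext phi ^^ n) [a]) \<le> B) \<Longrightarrow> (morph_ext phi ^^ (m + m)) [a] = (morph_ext phi ^^ m) [a]"
    and rec: "\<And>y. length y = k \<Longrightarrow> (\<exists>n\<ge>1. y \<in> set ((morph_ext (Kmor k phi) ^^ n) [y])) \<Longrightarrow> y \<in> set ((morph_ext (Kmor k phi) ^^ m) [y])"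
    using choose_m[OF k ne] by blast
  define psi where "psi = morph_ext phi ^^ m"
  define F where "F = morph_ext (Kmor k phi) ^^ m"
  define W where "W = Wk k w"
  have hF: "hom F" unfolding F_def by (rule hom_pow[OF morph_ext_hom])
  have nF: "ne F" unfolding F_def by (rule ne_pow[OF morph_ext_hom Kmor_ne[OF ne]])
  have hP: "hom psi" unfolding psi_def by (rule hom_pow[OF morph_ext_hom])
  have fpF: "fixpt F W" unfolding F_def W_def by (rule fixpt_W[OF k ne fixpt_pow[OF fp]])
  have Flet: "F [y] = kb k (psi y) (length (psi [hd y]))" if "length y = k" for y
    unfolding F_def psi_def by (rule K_letter[OF k ne that])
  have Ffix: "F [y] = [y]" if ly: "length y = k" and fx: "\<forall>z\<in>set y. psi [z] = [z]" for y
  proof -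
    have "psi y = concat (map (\<lambda>z. psi [z]) y)" by (rule hom_concat[OF hP])
    also have "\<dots> = concat (map (\<lambda>z. [z]) y)" using fx by (intro arg_cong[where f=concat] map_cong) auto
    finally have py: "psi y = y" by simp
    have "y \<noteq> []" using ly k by auto
    hence "hd y \<in> set y" by simp
    hence "psi [hd y] = [hd y]" using fx by blast
    thus ?thesis using Flet[OF ly] py ly by (simp add: kb_def)
  qed
  have densw: "(\<lambda>N. real (card {i. i < N \<and> psi [w i] \<noteq> [w i]}) / real N) \<longlonglongrightarrow> 0"
    unfolding psi_def by (rule dens_w[OF ne fp freq cB idem])
  have densW: "(\<lambda>N. real (card {i. i < N \<and> F [W i] \<noteq> [W i]}) / real N) \<longlonglongrightarrow> 0"
  proof (rule dens_shift[OF densw])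
    fix i assume nfx: "F [W i] \<noteq> [W i]"
    show "\<exists>t<k. psi [w (i + t)] \<noteq> [w (i + t)]"
    proof (rule ccontr)
      assume "\<not> (\<exists>t<k. psi [w (i + t)] \<noteq> [w (i + t)])"
      hence "\<forall>z\<in>set (W i). psi [z] = [z]" by (auto simp: W_def Wk_def)
      hence "F [W i] = [W i]" using Ffix[of "W i"] by (simp add: W_def)
      thus False using nfx by simp
    qed
  qed
  define x0 where "x0 = W 0"
  define S where "S = {y. \<exists>n. y \<in> set ((F ^^ n) [x0])}"
  have pre1: "pre W 1 = [x0]" by (simp add: pre_def x0_def)
  have Fn: "(F ^^ n) [x0] = pre W (length ((F ^^ n) [x0]))" for n
    using fixptD[OF fixpt_pow[OF fpF, of n], of 1] unfolding pre1 by simp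
  have SW: "\<exists>i. y = W i" if "y \<in> S" for y
  proof -
    from that obtain n where "y \<in> set ((F ^^ n) [x0])" by (auto simp: S_def)
    hence "y \<in> set (pre W (length ((F ^^ n) [x0])))" using Fn by metis
    thus ?thesis by (auto simp: pre_def)
  qed
  have Slen: "length y = k" if "y \<in> S" for y using SW[OF that] by (auto simp: W_def)
  have fk: "finite {y::'a list. length y = k}" using finite_lists_length_eq[of "UNIV::'a set" k] by simp
  have Sfin: "finite S"
    by (rule finite_subset[OF _ fk]) (use Slen in auto)
  have Sclos: "\<forall>y\<in>S. set (F [y]) \<subseteq> S"
  proof
    fix y assume "y \<in> S"
    then obtain n where n: "y \<in> set ((F ^^ n) [x0])" by (auto simp: S_def)
    have "set (F [y]) \<subseteq> set (F ((F ^^ n) [x0]))" by (rule set_hom_sub[OF hF n])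
    also have "set (F ((F ^^ n) [x0])) = set ((F ^^ Suc n) [x0])" by simp
    finally show "set (F [y]) \<subseteq> S" unfolding S_def by blast
  qed
  have nd: "\<forall>c\<in>S. \<forall>p\<ge>1. count_list ((F ^^ p) [c]) c \<le> 1"
  proof (intro ballI allI impI, rule ccontr)
    fix c p assume cS: "c \<in> S" and p: "p \<ge> (1::nat)" and "\<not> count_list ((F ^^ p) [c]) c \<le> 1"
    hence c2: "count_list ((F ^^ p) [c]) c \<ge> 2" by simp
    obtain j where cj: "c = W j" using SW[OF cS] by blast
    define Kc where "Kc = Max ((\<lambda>y. length ((F ^^ p) [y])) ` {y::'a list. length y = k})"
    have Kb: "length ((F ^^ p) [W i]) \<le> Kc" for i
      unfolding Kc_def by (rule Max_ge) (use fk in \<open>auto simp: W_def\<close>)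
    have dp: "(\<lambda>N. real (card {i. i < N \<and> (F ^^ p) [W i] \<noteq> [W i]}) / real N) \<longlonglongrightarrow> 0"
    proof (rule real_tendsto_sandwich[OF _ _ tendsto_const densW])
      show "eventually (\<lambda>N. 0 \<le> real (card {i. i < N \<and> (F ^^ p) [W i] \<noteq> [W i]}) / real N) sequentially" by simp
      have "card {i. i < N \<and> (F ^^ p) [W i] \<noteq> [W i]} \<le> card {i. i < N \<and> F [W i] \<noteq> [W i]}" for N
        by (rule card_mono) (auto intro: fix_pow)
      thus "eventually (\<lambda>N. real (card {i. i < N \<and> (F ^^ p) [W i] \<noteq> [W i]}) / real N
               \<le> real (card {i. i < N \<and> F [W i] \<noteq> [W i]}) / real N) sequentially"
        by (intro always_eventually allI divide_right_mono) auto
    qed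
    show False
      by (rule no_double[OF hom_pow[OF hF] ne_pow[OF hF nF] fixpt_pow[OF fpF] dp Kb, of j])
         (use c2 cj in simp)
  qed
  have rcF: "\<forall>y\<in>S. (\<exists>n\<ge>1. y \<in> set ((F ^^ n) [y])) \<longrightarrow> y \<in> set (F [y])"
  proof (intro ballI impI)
    fix y assume yS: "y \<in> S" and "\<exists>n\<ge>1. y \<in> set ((F ^^ n) [y])"
    then obtain n where n: "n \<ge> 1" "y \<in> set ((F ^^ n) [y])" by blast
    have "F ^^ n = morph_ext (Kmor k phi) ^^ (m * n)" unfolding F_def by (rule funpow_mult)
    moreover have "m * n \<ge> 1" using m1 n by simp
    ultimately have "\<exists>n\<ge>1. y \<in> set ((morph_ext (Kmor k phi) ^^ n) [y])" using n by metis
    thus "y \<in> set (F [y])" using rec[OF Slen[OF yS]] by (simp add: F_def)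
  qed
  obtain r where wfr: "wf r" and str: "\<forall>y\<in>S. (\<forall>z\<in>set (F [y]). (z, y) \<in> r) \<or>
                 (\<exists>\<alpha> \<beta>. F [y] = \<alpha> @ y # \<beta> \<and> (\<forall>z\<in>set (\<alpha> @ \<beta>). (z, y) \<in> r))"
    using structure_from_nd[OF hF nF Sfin Sclos nd rcF] by blast
  have x0S: "x0 \<in> S" unfolding S_def by (intro CollectI exI[of _ 0]) simp
  have g: "good (\<lambda>n. real (length ((F ^^ n) [x0]))) (\<lambda>n. real (count_list ((F ^^ n) [x0]) v))"
    by (rule structure_good[OF hF nF wfr Sclos str x0S])
  have lx0: "length x0 = k" by (simp add: x0_def W_def)
  have hx0: "hd x0 = b" using k w0 by (simp add: x0_def W_def Wk_def hd_map)
  have "length (psi [b]) \<ge> Suc m" unfolding psi_def using pow_b_len[OF ne pb u] by blast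
  hence L2: "length (F [x0]) \<ge> 2" using Flet[OF lx0] hx0 m1 by simp
  have F1: "F [x0] = pre W (length (F [x0]))" using Fn[of 1] by simp
  define rest where "rest = map W [1..<length (F [x0])]"
  have hd: "F [x0] = x0 # rest"
  proof -
    have "0 < length (F [x0])" using L2 by linarith
    hence "[0..<length (F [x0])] = 0 # [1..<length (F [x0])]" by (simp add: upt_rec)
    thus ?thesis using F1 by (simp add: pre_def rest_def x0_def)
  qed
  have rest: "rest \<noteq> []" proof - have "1 < length (F [x0])" using L2 by linarith moreover have "F [x0] \<noteq> []" using L2 by (metis list.size(3) not_numeral_le_zero) ultimately show ?thesis by (simp add: rest_def) qed
  have "convergent (\<lambda>N. real (count_list (pre W N) v) / real N)"
    using good_to_conv[OF hF nF fpF] hd rest g unfolding x0_def by blast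
  thus ?thesis by (simp add: W_def)
qed

theorem theorem1:
  fixes phi :: "'a::finite \<Rightarrow> 'a list" and w :: "nat \<Rightarrow> 'a"
  assumes "non_erasing phi"
    and "pure_morphic_gen phi w"
    and "\<forall>a. freq_exists w [a]"
  shows "\<forall>v. is_factor v w \<longrightarrow> freq_exists w v"
proof (intro allI impI)
  fix v assume fac: "is_factor v w"
  note ne = assms(1)
  from assms(2) obtain b u where u: "u \<noteq> []" and pb: "phi b = b # u"
    and lim: "word_limit (\<lambda>i. (morph_ext phi ^^ i) [b]) w"
    unfolding pure_morphic_gen_def by blast
  have fp: "fixpt (morph_ext phi) w" by (rule word_limit_fixpt[OF ne pb u lim])
  have w0: "w 0 = b"
  proof -
    from lim obtain i0 where i0: "\<forall>i\<ge>i0. 0 < length ((morph_ext phi ^^ i) [b]) \<and> (morph_ext phi ^^ i) [b] ! 0 = w 0"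
      unfolding word_limit_def by blast
    obtain t where "(morph_ext phi ^^ i0) [b] = b # t" using pow_b_len[OF ne pb u] by blast
    thus ?thesis using i0 by auto
  qed
  have occ1: "occ_count w [a] M = count_list (pre w M) a" for a M
  proof -
    have "{i. i < M \<and> occurs_at w [a] i} = {i. i < M \<and> w i = a}" by (auto simp: occurs_at_def)
    thus ?thesis unfolding occ_count_def count_list_pre by simp
  qed
  define f where "f a = (SOME L. (\<lambda>n. real (occ_count w [a] n) / real n) \<longlonglongrightarrow> L)" for a
  have freq: "(\<lambda>M. cnt w a M / real M) \<longlonglongrightarrow> f a" for a
  proof -
    have "\<exists>L. (\<lambda>n. real (occ_count w [a] n) / real n) \<longlonglongrightarrow> L" using assms(3) by (simp add: freq_exists_def)
    hence "(\<lambda>n. real (occ_count w [a] n) / real n) \<longlonglongrightarrow> f a" unfolding f_def by (rule someI_ex)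
    thus ?thesis by (simp add: cnt_def occ1)
  qed
  define k where "k = length v"
  have k: "0 < k" using fac by (simp add: is_factor_def k_def)
  have conv: "convergent (\<lambda>N. real (count_list (pre (Wk k w) N) v) / real N)"
  proof (cases "\<exists>a0. f a0 > 0 \<and> \<not> (\<exists>B. \<forall>n. length ((morph_ext phi ^^ n) [a0]) \<le> B)")
    case True
    then obtain a0 where a0: "f a0 > 0" and nb: "\<not> (\<exists>B. \<forall>n. length ((morph_ext phi ^^ n) [a0]) \<le> B)" by blast
    have gr: "\<exists>n. real (length ((morph_ext phi ^^ n) [a0])) > B" for B
    proof -
      obtain n where "length ((morph_ext phi ^^ n) [a0]) > nat \<lceil>B\<rceil>" using nb by (meson not_le)
      thus ?thesis by (intro exI[of _ n]) linarith
    qed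
    show ?thesis by (rule caseA[OF k ne fp freq a0 gr])
  next
    case False
    hence cB: "\<And>a. f a > 0 \<Longrightarrow> \<exists>B. \<forall>n. length ((morph_ext phi ^^ n) [a]) \<le> B" by blast
    show ?thesis by (rule caseB[OF k ne fp freq cB w0 pb u])
  qed
  thus "freq_exists w v" unfolding freq_exists_def occ_count_W k_def convergent_def .
qed

end
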